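(* Let $G$, $C_n$, $\pi$, $S$ be as in the standing setup below, write $n=p_1^{k_1}\cdots p_m^{k_m}$, and assume the exponent of $2$ in $n$ is not equal to $2$. Then: (1) If $G$ is a Roquette group, then $S$ contains no non-trivial subgroup of the form $\langle\alpha_p\rangle$ with $p$ a prime dividing $n$ (i.e. $\alpha_p\notin S$ for every prime $p$ with $p^2\mid n$). (2) If for every prime $p_j$ dividing $n$ the projection $S_{p_j}$ of $S$ to $\mathrm{Aut}(C_{p_j^{k_j}})$ does not contain a non-trivial subgroup $\langle\alpha_{p_j}\rangle$ (where $\alpha_{p_j}$ is viewed as the automorphism $x\mapsto x^{1+p_j^{k_j-1}}$ of $C_{p_j^{k_j}}$), then $G$ has no non-trivial expansive subgroup with trivial $G$-core. (3) If $G$ has no non-trivial expansive subgroup with trivial $G$-core, then $G$ is a Roquette group.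
   Context: Standing setup: $G$ is a finite group, $C_n$ is a normal cyclic subgroup of $G$ of order $n$ with $C_G(C_n)=C_n$, and $\pi:G\to\mathrm{Aut}(C_n)$ sends $g$ to the automorphism $c\mapsto gcg^{-1}$ of $C_n$; thus $\ker\pi=C_n$ and $S:=\pi(G)\cong G/C_n$, giving an exact sequence $1\to C_n\to G\to S\to1$. Write $C_n=\prod_iC_{p_i^{k_i}}$ (Sylow subgroups) and $\mathrm{Aut}(C_n)=\prod_i\mathrm{Aut}(C_{p_i^{k_i}})$. For a prime $p\mid n$ with exponent $k$ in $n$, let $g_p$ generate $C_{p^k}$ and let $\alpha_p\in\mathrm{Aut}(C_n)$ be given by $\alpha_p(g_p)=g_p^{1+p^{k-1}}$ and the identity on the other Sylow subgroups; $\alpha_p$ has order $p$ if $k>1$ and is trivial if $k=1$. A finite group is Roquette if all its normal abelian subgroups are cyclic. For $X\le H$, the $H$-core of $X$ is $\bigcap_{h\in H}hXh^{-1}$. A subgroup $T\le G$ is expansive if for every $g\in G\setminus N_G(T)$, the $N_G(T)$-core of $(gTg^{-1}\cap N_G(T))T$ contains $T$ properly; non-trivial means $T\ne1$. *)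

theory Defs
  imports "HOL-Algebra.Algebra" "HOL-Number_Theory.Number_Theory"
begin

definition centralizer :: "('a, 'b) monoid_scheme \<Rightarrow> 'a set \<Rightarrow> 'a set" where
  "centralizer G Y = {g \<in> carrier G. \<forall>x\<in>Y. monoid.mult G g x = monoid.mult G x g}"

definition core :: "('a, 'b) monoid_scheme \<Rightarrow> 'a set \<Rightarrow> 'a set \<Rightarrow> 'a set" where
  "core G H Y = (\<Inter>h\<in>H. h <#\<^bsub>G\<^esub> Y #>\<^bsub>G\<^esub> inv\<^bsub>G\<^esub> h)"

definition expansive :: "('a, 'b) monoid_scheme \<Rightarrow> 'a set \<Rightarrow> bool" where
  "expansive G T \<longleftrightarrow> subgroup T G \<and>
     (\<forall>g \<in> carrier G - normalizer G T.
        T \<subset> core G (normalizer G T)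
               (((g <#\<^bsub>G\<^esub> T #>\<^bsub>G\<^esub> inv\<^bsub>G\<^esub> g) \<inter> normalizer G T) <#>\<^bsub>G\<^esub> T))"

definition roquette :: "('a, 'b) monoid_scheme \<Rightarrow> bool" where
  "roquette G \<longleftrightarrow> (\<forall>A. A \<lhd> G \<and> (\<forall>x\<in>A. \<forall>y\<in>A. monoid.mult G x y = monoid.mult G y x)
                      \<longrightarrow> cyclic_group (subgroup_generated G A))"

definition sylow_part :: "('a, 'b) monoid_scheme \<Rightarrow> 'a set \<Rightarrow> nat \<Rightarrow> 'a set" where
  "sylow_part G C p = {c \<in> C. c [^]\<^bsub>G\<^esub> (p ^ multiplicity p (card C)) = \<one>\<^bsub>G\<^esub>}"

(* the automorphism alpha_p of C: x \<mapsto> x^(1+p^(k-1)) on the Sylow p-part, identity on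
   the other Sylow parts; on the cyclic group C it is the power map c \<mapsto> c^e with
   e = 1 + p^(k-1) mod p^k and e = 1 mod n/p^k (any such e gives the same map) *)
definition alpha_exp :: "nat \<Rightarrow> nat \<Rightarrow> nat" where
  "alpha_exp n p = (SOME e. [e = 1 + p ^ (multiplicity p n - 1)] (mod p ^ multiplicity p n)
                          \<and> [e = 1] (mod (n div p ^ multiplicity p n)))"

definition alpha_aut :: "('a, 'b) monoid_scheme \<Rightarrow> 'a set \<Rightarrow> nat \<Rightarrow> 'a \<Rightarrow> 'a" where
  "alpha_aut G C p = (\<lambda>c. c [^]\<^bsub>G\<^esub> alpha_exp (card C) p)"

(* pi(g) is conjugation c \<mapsto> g c g^-1 on C; "phi \<in> S = pi(G)" *)
definition in_image_pi :: "('a, 'b) monoid_scheme \<Rightarrow> 'a set \<Rightarrow> ('a \<Rightarrow> 'a) \<Rightarrow> bool" where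
  "in_image_pi G C \<phi> \<longleftrightarrow> (\<exists>g\<in>carrier G. \<forall>c\<in>C. monoid.mult G (monoid.mult G g c) (inv\<^bsub>G\<^esub> g) = \<phi> c)"

end

theory Submission
  imports Defs
begin


lemma poly3_dvd:
  fixes z :: int
  shows "z^3 dvd (1+z)^i - 1 - int i*z - int (i choose 2)*z^2"
proof (induction i)
  case 0 then show ?case by (simp add: numeral_2_eq_2)
next
  case (Suc i)
  then obtain Q where Q: "(1+z)^i - 1 - int i*z - int (i choose 2)*z^2 = z^3 * Q" by (auto elim: dvdE)
  have ch: "Suc i choose 2 = i + (i choose 2)"
    by (simp add: numeral_2_eq_2)
  have "(1+z)^Suc i - 1 - int (Suc i)*z - int (Suc i choose 2)*z^2
        = (1+z) * ((1+z)^i - 1 - int i*z - int (i choose 2)*z^2) + int (i choose 2) * z^3"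
    by (simp add: ch algebra_simps power2_eq_square power3_eq_cube)
  also have "\<dots> = z^3 * ((1+z)*Q + int (i choose 2))" unfolding Q by (simp add: algebra_simps)
  finally show ?case by simp
qed

lemma poly2_dvd:
  fixes z :: int
  shows "z^2 dvd (1+z)^i - 1 - int i*z"
proof (induction i)
  case 0 then show ?case by simp
next
  case (Suc i)
  then obtain Q where Q: "(1+z)^i - 1 - int i*z = z^2 * Q" by (auto elim: dvdE)
  have "(1+z)^Suc i - 1 - int (Suc i)*z = (1+z) * ((1+z)^i - 1 - int i*z) + int i * z^2"
    by (simp add: algebra_simps power2_eq_square)
  also have "\<dots> = z^2 * ((1+z)*Q + int i)" unfolding Q by (simp add: algebra_simps)
  finally show ?case by simp
qed

lemma lift_lemma:
  fixes p v :: nat and y :: int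
  assumes p: "Factorial_Ring.prime p" and v: "v \<ge> 1" and v2: "p = 2 \<Longrightarrow> v \<ge> 2" and ny: "\<not> int p dvd y"
  shows "\<exists>y'. (1 + int p^v*y)^p = 1 + int p^(v+1)*y' \<and> \<not> int p dvd y'"
proof -
  define z where "z = int p^v*y"
  obtain Q where Q: "(1+z)^p - 1 - int p*z - int (p choose 2)*z^2 = z^3 * Q"
    using poly3_dvd[of z p] by (auto elim: dvdE)
  have d1: "int p^(v+2) dvd int (p choose 2)*z^2"
  proof (cases "p = 2")
    case True
    then have "v \<ge> 2" using v2 by simp
    then have "int p^(v+2) dvd int p^(2*v)" by (intro le_imp_power_dvd) simp
    also have "\<dots> dvd z^2" by (simp add: z_def power_mult_distrib power_mult[symmetric] mult.commute)
    finally show ?thesis by simp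
  next
    case False
    have p2: "p \<ge> 2" using p prime_ge_2_nat by blast
    then have "p > 2" using False by simp
    then have "p dvd (p choose 2)" using p by (intro dvd_choose_prime) auto
    then have a: "int p dvd int (p choose 2)" by simp
    have "int p^(v+2) dvd int p^(Suc (2*v))"
      by (rule le_imp_power_dvd) (use v in simp)
    then have "int p^(v+2) dvd int p * int p^(2*v)" by simp
    also have "\<dots> dvd int (p choose 2) * z^2"
      using a by (intro mult_dvd_mono) (simp_all add: z_def power_mult_distrib power_mult[symmetric] mult.commute)
    finally show ?thesis .
  qed
  have d2: "int p^(v+2) dvd z^3 * Q"
  proof -
    have "int p^(v+2) dvd int p^(3*v)" using v by (intro le_imp_power_dvd) simp
    also have "\<dots> dvd z^3" by (simp add: z_def power_mult_distrib power_mult[symmetric] mult.commute)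
    finally show ?thesis by simp
  qed
  obtain W where W: "int (p choose 2)*z^2 + z^3 * Q = int p^(v+2) * W"
    using dvd_add[OF d1 d2] by (auto elim: dvdE)
  have "(1+z)^p = 1 + int p^(v+1) * (y + int p * W)"
    using Q W by (simp add: z_def algebra_simps power_add)
  moreover have "\<not> int p dvd (y + int p * W)"
    using ny by (simp add: dvd_add_left_iff)
  ultimately show ?thesis unfolding z_def by blast
qed

lemma lift_iter:
  fixes p v :: nat and e :: nat and y :: int
  assumes p: "Factorial_Ring.prime p" and v: "v \<ge> 1" and v2: "p = 2 \<Longrightarrow> v \<ge> 2"
    and ny: "\<not> int p dvd y" and e: "int e = 1 + int p^v * y"
  shows "\<exists>yj. int e ^ (p^j) = 1 + int p^(v+j) * yj \<and> \<not> int p dvd yj"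
proof (induction j)
  case 0 then show ?case using e ny by auto
next
  case (Suc j)
  then obtain yj where yj: "int e ^ (p^j) = 1 + int p^(v+j) * yj" "\<not> int p dvd yj" by blast
  have "\<exists>y'. (1 + int p^(v+j)*yj)^p = 1 + int p^(v+j+1)*y' \<and> \<not> int p dvd y'"
    by (rule lift_lemma[OF p]) (use v v2 yj in auto)
  then obtain y' where y': "(1 + int p^(v+j)*yj)^p = 1 + int p^(v+j+1)*y'" "\<not> int p dvd y'"
    by blast
  have "int e ^ (p^Suc j) = (int e ^ (p^j))^p" by (simp add: power_mult[symmetric] mult.commute)
  also have "\<dots> = 1 + int p^(v + Suc j)*y'" using yj(1) y'(1) by simp
  finally show ?case using y'(2) by blast
qed

lemma nt_part2:
  fixes n e :: nat
  assumes n0: "n > 0" and e1: "e \<ge> 1" and d: "n dvd (e-1)^2" and nd: "\<not> n dvd (e-1)"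
    and m2: "multiplicity (2::nat) n \<noteq> 2"
  shows "\<exists>p M. Factorial_Ring.prime p \<and> p^2 dvd n \<and>
           [e^M = 1 + p^(multiplicity p n - 1)] (mod p^(multiplicity p n))"
proof -
  have em: "e - 1 \<noteq> 0" using nd by auto
  obtain p where p: "Factorial_Ring.prime p" and pk: "\<not> multiplicity p n \<le> multiplicity p (e-1)"
    using multiplicity_le_imp_dvd[of n "e-1"] n0 nd by auto
  define k where "k = multiplicity p n"
  define v where "v = multiplicity p (e-1)"
  have vk: "v < k" using pk by (simp add: k_def v_def)
  have "p^k dvd n" by (simp add: k_def multiplicity_dvd)
  then have "p^k dvd (e-1)^2" using d dvd_trans by blast
  then have "k \<le> multiplicity p ((e-1)^2)"
    using em p by (subst (asm) power_dvd_iff_le_multiplicity) (auto simp: prime_gt_1_nat)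
  also have "\<dots> = 2 * v" unfolding v_def
    using em p by (simp add: prime_elem_multiplicity_power_distrib)
  finally have k2v: "k \<le> 2*v" .
  have v1: "v \<ge> 1" using vk k2v by linarith
  have k2: "k \<ge> 2" using vk v1 by linarith
  have p2n: "p^2 dvd n"
    using k2 n0 p by (subst power_dvd_iff_le_multiplicity) (auto simp: k_def)
  have v2: "v \<ge> 2" if "p = 2"
  proof (rule ccontr)
    assume "\<not> v \<ge> 2"
    then have "k = 2" using v1 k2v k2 by linarith
    with m2 that show False by (simp add: k_def)
  qed
  have nu: "\<not> is_unit p" using prime_gt_1_nat[OF p] by simp
  obtain y where y: "e - 1 = p^v * y" "\<not> p dvd y"
    using multiplicity_decompose'[OF em nu] unfolding v_def by blast
  have "e = 1 + p^v * y" using y(1) e1 by simp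
  then have ey: "int e = 1 + int p^v * int y" by simp
  obtain w where w: "int e ^ (p^(k-1-v)) = 1 + int p^(k-1) * w" "\<not> int p dvd w"
    using lift_iter[OF p v1 v2 _ ey, of "k-1-v"] y(2) vk by auto
  have "Factorial_Ring.prime (int p)" using p by simp
  then have "coprime (int p) w" using w(2) by (rule prime_imp_coprime)
  then have cop: "coprime w (int p)" by (simp add: coprime_commute)
  obtain M' where M': "[w * M' = 1] (mod int p)" using cong_solve_coprime_int[OF cop] by blast
  define M'' where "M'' = nat (M' mod int p)"
  have "[w * int M'' = w * M'] (mod int p)"
    unfolding M''_def using p by (intro cong_scalar_left) (simp add: prime_gt_0_nat cong_def)
  then have M'': "[w * int M'' = 1] (mod int p)" using M' cong_trans by blast
  define Xv where "Xv = int p^(k-1) * w"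
  obtain Q where Q: "(1+Xv)^M'' - 1 - int M''*Xv = Xv^2 * Q" using poly2_dvd[of Xv M''] by (auto elim: dvdE)
  have "int p^k dvd Xv^2"
  proof -
    have "int p^k dvd int p^(2*(k-1))" using k2 by (intro le_imp_power_dvd) simp
    also have "\<dots> dvd Xv^2" by (simp add: Xv_def power_mult_distrib power_mult[symmetric] mult.commute)
    finally show ?thesis .
  qed
  then have h1: "[(1+Xv)^M'' = 1 + int M''*Xv] (mod int p^k)"
    using Q unfolding cong_iff_dvd_diff by (simp add: algebra_simps)
  obtain R where R: "w * int M'' - 1 = int p * R" using M'' by (auto simp: cong_iff_dvd_diff elim!: dvdE)
  have "int M''*Xv - int p^(k-1) = int p^(k-1) * (w * int M'' - 1)"
    by (simp add: Xv_def algebra_simps)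
  also have "\<dots> = int p^(k-1) * int p * R" using R by simp
  also have "\<dots> = int p^k * R"
  proof -
    have "int p^k = int p^(k-1) * int p" using k2 by (cases k) auto
    then show ?thesis by simp
  qed
  finally have h2: "[1 + int M''*Xv = 1 + int p^(k-1)] (mod int p^k)"
    unfolding cong_iff_dvd_diff by simp
  have "int e ^ (p^(k-1-v) * M'') = (1+Xv)^M''" using w(1) by (simp add: Xv_def power_mult)
  then have "[int e ^ (p^(k-1-v) * M'') = 1 + int p^(k-1)] (mod int p^k)"
    using h1 h2 cong_trans by simp
  then have "[e ^ (p^(k-1-v) * M'') = 1 + p^(k-1)] (mod p^k)"
    unfolding cong_int_iff[symmetric] by simp
  then show ?thesis using p p2n unfolding k_def by blast
qed



lemma alpha_exp_exists:
  fixes n p :: nat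
  assumes p: "Factorial_Ring.prime p" and n0: "n > 0"
  shows "\<exists>e. [e = 1 + p ^ (multiplicity p n - 1)] (mod p ^ multiplicity p n)
              \<and> [e = 1] (mod (n div p ^ multiplicity p n))"
proof -
  have nu: "\<not> is_unit p" using prime_gt_1_nat[OF p] by simp
  have nn: "n \<noteq> 0" using n0 by simp
  have "\<not> p dvd (n div p ^ multiplicity p n)" using multiplicity_decompose[OF nn nu] .
  then have "coprime p (n div p ^ multiplicity p n)" using prime_imp_coprime[OF p] by blast
  then have "coprime (p ^ multiplicity p n) (n div p ^ multiplicity p n)" by simp
  then show ?thesis by (rule binary_chinese_remainder_nat)
qed

lemma nt_part1:
  fixes n p e :: nat
  assumes p: "Factorial_Ring.prime p" and n0: "n > 0" and p2n: "p^2 dvd n"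
    and m2: "p = 2 \<Longrightarrow> multiplicity p n \<noteq> 2"
    and e1: "[e = 1 + p ^ (multiplicity p n - 1)] (mod p ^ multiplicity p n)"
    and e2: "[e = 1] (mod (n div p ^ multiplicity p n))"
  shows "int n dvd int e ^ p - 1"
    and "\<not> int n dvd int e - 1"
    and "\<And>t. int n dvd t * (int e - 1) \<Longrightarrow> int p dvd t"
    and "\<exists>s'. (\<Sum>j<p. int e^j) = int p * s' \<and> coprime s' (int n)"
    and "int n dvd int (n div p) * (int e - 1)"
proof -
  define k where "k = multiplicity p n"
  define m where "m = n div p^k"
  have nu: "\<not> is_unit p" using prime_gt_1_nat[OF p] by simp
  have nn: "n \<noteq> 0" using n0 by simp
  have k2: "k \<ge> 2" using p2n nn nu by (simp add: k_def power_dvd_iff_le_multiplicity)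
  have pm: "\<not> p dvd m" unfolding m_def k_def using multiplicity_decompose[OF nn nu] .
  have nm: "n = p^k * m" unfolding m_def k_def by (simp add: multiplicity_dvd)
  have nmi: "int n = int p^k * int m" using nm by simp
  have pkn: "int p^k dvd int n" using nmi by simp
  have cpm: "coprime (int p) (int m)" using prime_imp_coprime[OF p pm] by simp
  have p1: "p > 1" using prime_gt_1_nat[OF p] .
  have pkS: "p^k = p * p^(k-1)" using k2 by (cases k) auto
  have lt: "1 + p^(k-1) < p^k"
  proof -
    have "p^k = p * p^(k-1)" by (rule pkS)
    also have "\<dots> \<ge> 2 * p^(k-1)" using p1 by (intro mult_right_mono) auto
    finally have "p^k \<ge> 2 * p^(k-1)" .
    moreover have "p^(k-1) > 1" using p1 k2 by (intro one_less_power) auto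
    ultimately show ?thesis by linarith
  qed
  have "e mod p^k = (1 + p^(k-1)) mod p^k" using e1 unfolding k_def cong_def .
  also have "\<dots> = 1 + p^(k-1)" using lt by (rule mod_less)
  finally have emk: "e mod p^k = 1 + p^(k-1)" .
  have ee: "e = 1 + p^(k-1) * (1 + p * (e div p^k))"
  proof -
    have "e = p^k * (e div p^k) + e mod p^k" by simp
    also have "\<dots> = 1 + p^(k-1) * (1 + p * (e div p^k))"
      by (simp only: emk) (simp add: pkS algebra_simps)
    finally show ?thesis .
  qed
  define y where "y = 1 + p * (e div p^k)"
  have ny: "\<not> int p dvd int y"
  proof
    assume "int p dvd int y"
    moreover have "int y = int p * int (e div p^k) + 1" by (simp add: y_def)
    ultimately have "int p dvd 1" by (simp add: dvd_add_right_iff)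
    then have "int p \<le> 1" by (simp add: zdvd_imp_le)
    with p1 show False by simp
  qed
  have "int e = int (1 + p^(k-1) * y)" unfolding y_def by (simp only: ee[symmetric])
  then have eyi: "int e = 1 + int p^(k-1) * int y" by simp
  have eyi': "int e - 1 = int p^(k-1) * int y" using eyi by simp
  have v1: "k - 1 \<ge> 1" using k2 by simp
  have v2: "k - 1 \<ge> 2" if "p = 2"
  proof -
    have "k \<noteq> 2" using m2[OF that] by (simp add: k_def)
    then show ?thesis using k2 by linarith
  qed
  obtain y' where y': "(1 + int p^(k-1)*int y)^p = 1 + int p^(k-1+1)*y'" "\<not> int p dvd y'"
    using lift_lemma[OF p v1 v2 ny] by blast
  have kk: "k - 1 + 1 = k" using k2 by simp
  have ep: "int e ^ p - 1 = int p^k * y'" using y'(1) eyi kk by simp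
  have em: "[int e = 1] (mod int m)" using e2 cong_int_iff[of e 1 m] by (simp add: m_def k_def)
  have emp: "int m dvd int e ^ p - 1"
    using cong_pow[OF em, of p] by (simp add: cong_iff_dvd_diff dvd_diff_commute)
  have cpkm: "coprime (int p^k) (int m)" using cpm by simp
  show "int n dvd int e ^ p - 1"
    using divides_mult[OF _ emp cpkm] ep nm by simp
  have pk: "int p^k = int p^(k-1) * int p" using pkS by (metis of_nat_mult of_nat_power mult.commute)
  have ppos: "int p^(k-1) \<noteq> 0" using p1 by simp
  show "\<not> int n dvd int e - 1"
  proof
    assume "int n dvd int e - 1"
    then have "int p^k dvd int e - 1" using pkn dvd_trans by blast
    then have "int p^(k-1) * int p dvd int p^(k-1) * int y" using pk eyi' by simp
    then have "int p dvd int y" by (simp only: dvd_mult_cancel_left) (use ppos in blast)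
    with ny show False by simp
  qed
  show "int p dvd t" if "int n dvd t * (int e - 1)" for t
  proof -
    have "int p^k dvd t * (int e - 1)" using that pkn dvd_trans by blast
    then have "int p^(k-1) * int p dvd int p^(k-1) * (t * int y)" using pk eyi' by (simp add: algebra_simps)
    then have "int p dvd t * int y" by (simp only: dvd_mult_cancel_left) (use ppos in blast)
    then show ?thesis using ny p by (simp add: prime_dvd_mult_iff)
  qed
  define s where "s = (\<Sum>j<p. int e^j)"
  have "int e ^ p - 1 = (int e - 1) * s" unfolding s_def by (rule power_diff_1_eq)
  then have "int p^(k-1) * (int p * y') = int p^(k-1) * (int y * s)"
    using ep eyi' pk by (simp add: algebra_simps)
  then have sy: "int p * y' = int y * s" by (simp only: mult_left_cancel[OF ppos])
  then have "int p dvd int y * s" by (metis dvd_triv_left)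
  then have "int p dvd s" using ny p by (simp add: prime_dvd_mult_iff)
  then obtain s' where s': "s = int p * s'" by (auto elim: dvdE)
  have "int p * y' = int p * (int y * s')" using sy s' by (simp add: algebra_simps)
  then have "y' = int y * s'" using p1 by simp
  then have nps: "\<not> int p dvd s'" using y'(2) by auto
  have "[s = (\<Sum>j<p. 1)] (mod int m)" unfolding s_def
    by (rule cong_sum) (use cong_pow[OF em] in simp)
  then have "[int p * s' = int p * 1] (mod int m)" using s' by simp
  then have s1: "[s' = 1] (mod int m)" using cong_mult_lcancel[OF cpm] by blast
  have c1: "coprime s' (int m)"
    using cong_imp_coprime[OF cong_sym[OF s1]] by simp
  have "Factorial_Ring.prime (int p)" using p by simp
  then have "coprime (int p) s'" using nps by (rule prime_imp_coprime)
  then have c2: "coprime s' (int p ^ k)" by (simp add: coprime_commute)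
  have "coprime s' (int p ^ k * int m)" using c1 c2 by (simp only: coprime_mult_right_iff)
  then have cn: "coprime s' (int n)" by (simp only: nmi)
  show "\<exists>s'. (\<Sum>j<p. int e^j) = int p * s' \<and> coprime s' (int n)"
  proof (intro exI conjI)
    show "(\<Sum>j<p. int e^j) = int p * s'" using s' by (simp only: s_def)
    show "coprime s' (int n)" by (rule cn)
  qed
  have "n = p * (p^(k-1) * m)" using nm pkS by (simp only: mult.assoc)
  then have ndp: "n div p = p^(k-1) * m" using p1 by simp
  have "int p^k dvd int p^(k-1 + (k-1))"
    using k2 by (intro le_imp_power_dvd) simp
  then have "int p^k dvd int p^(k-1) * int p^(k-1)" by (simp only: power_add)
  then have "int p^k * int m dvd int p^(k-1) * int p^(k-1) * (int m * int y)"
    by (intro mult_dvd_mono) auto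
  moreover have "int (n div p) * (int e - 1) = int p^(k-1) * int p^(k-1) * (int m * int y)"
    unfolding ndp eyi' by (simp add: algebra_simps)
  ultimately show "int n dvd int (n div p) * (int e - 1)" unfolding nmi by simp
qed



context group begin

lemma pow_mod_ord:
  assumes "x \<in> carrier G"
  shows "x [^] (i::nat) = x [^] (i mod ord x)"
proof -
  have h: "x [^] (ord x * (i div ord x)) = \<one>" using assms by (simp add: nat_pow_pow[symmetric])
  have "x [^] (ord x * (i div ord x)) \<otimes> x [^] (i mod ord x) = x [^] (ord x * (i div ord x) + i mod ord x)"
    using assms by (rule nat_pow_mult)
  then show ?thesis using h assms by simp
qed

lemma pow_eq_cong:
  assumes "x \<in> carrier G" "[i = j] (mod ord x)"
  shows "x [^] (i::nat) = x [^] j"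
  using assms pow_mod_ord[of x i] pow_mod_ord[of x j] unfolding cong_def by simp

lemma gen_nat:
  assumes "finite (carrier G)" "d \<in> carrier G" "w \<in> generate G {d}"
  shows "\<exists>k::nat. w = d [^] k"
  using assms generate_pow_on_finite_carrier[of d] by auto

lemma nat_in_gen:
  assumes "d \<in> carrier G"
  shows "d [^] (k::nat) \<in> generate G {d}"
  using assms generate_pow[OF assms] by (auto simp: int_pow_int[symmetric])

lemma ord_pos:
  assumes "finite (carrier G)" "x \<in> carrier G"
  shows "ord x > 0"
  using ord_ge_1[OF assms] by simp

lemma cyc_qtors:
  fixes q :: nat
  assumes fin: "finite (carrier G)" and d: "d \<in> carrier G"
    and w1: "w1 \<in> generate G {d}" and w2: "w2 \<in> generate G {d}"
    and q: "Factorial_Ring.prime q" and w1q: "w1 [^] q = \<one>" and w2q: "w2 [^] q = \<one>"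
    and w1n: "w1 \<noteq> \<one>"
  shows "\<exists>s::nat. w2 = w1 [^] s"
proof -
  obtain k1 :: nat where k1: "w1 = d [^] k1" using gen_nat[OF fin d w1] by blast
  obtain k2 :: nat where k2: "w2 = d [^] k2" using gen_nat[OF fin d w2] by blast
  define N where "N = ord d"
  have N0: "N > 0" unfolding N_def using ord_pos[OF fin d] .
  have a1: "N dvd k1 * q" using w1q k1 d unfolding N_def by (simp add: nat_pow_pow pow_eq_id)
  have a2: "N dvd k2 * q" using w2q k2 d unfolding N_def by (simp add: nat_pow_pow pow_eq_id)
  have a3: "\<not> N dvd k1" using w1n k1 d unfolding N_def by (simp add: pow_eq_id)
  have qN: "q dvd N"
  proof (rule ccontr)
    assume "\<not> q dvd N"
    then have "coprime q N" using prime_imp_coprime[OF q] by blast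
    then have "coprime N q" by (simp add: coprime_commute)
    then have "N dvd k1" using a1 by (simp add: coprime_dvd_mult_left_iff)
    with a3 show False by simp
  qed
  then obtain N' where N': "N = q * N'" by (auto elim: dvdE)
  have q0: "q > 0" using q prime_gt_0_nat by blast
  have "q * N' dvd q * k1" using a1 N' by (simp add: mult.commute)
  then have "N' dvd k1" using q0 by simp
  then obtain u where u: "k1 = N' * u" by (auto elim: dvdE)
  have "q * N' dvd q * k2" using a2 N' by (simp add: mult.commute)
  then have "N' dvd k2" using q0 by simp
  then obtain v where v: "k2 = N' * v" by (auto elim: dvdE)
  have nqu: "\<not> q dvd u"
  proof
    assume "q dvd u"
    then have "N dvd k1" using u N' by (simp add: mult.commute)
    with a3 show False by simp
  qed
  have "coprime u q" using prime_imp_coprime[OF q nqu] by (simp add: coprime_commute)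
  then obtain x where x: "[u * x = Suc 0] (mod q)" using cong_solve_coprime_nat by blast
  have "[u * (x * v) = v] (mod q)"
    using cong_mult[OF x cong_refl[of v]] by (simp add: mult.assoc)
  then have "(N' * (u * (x * v))) mod (N' * q) = (N' * v) mod (N' * q)"
    unfolding cong_def by (simp add: mod_mult_mult1)
  then have c: "[k1 * (x * v) = k2] (mod N)" unfolding cong_def using u v N'
    by (simp add: mult.commute mult.left_commute)
  have "w2 = d [^] (k1 * (x * v))"
    unfolding k2 using pow_eq_cong[OF d, of "k1 * (x*v)" k2] c unfolding N_def by simp
  also have "\<dots> = w1 [^] (x * v)" using d k1 by (simp add: nat_pow_pow)
  finally show ?thesis by blast
qed

lemma sub_pow_closed:
  assumes "subgroup H G" "h \<in> H"
  shows "h [^] (n::nat) \<in> H"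
  using subgroup_int_pow_closed[OF assms, of "int n"] by (simp add: int_pow_int)

lemma comm_pow_one:
  assumes "u \<in> carrier G" "v \<in> carrier G" "u \<otimes> v = v \<otimes> u"
    and "(u \<otimes> v) [^] (N::nat) = \<one>" "v [^] N = \<one>"
  shows "u [^] N = \<one>"
proof -
  have "\<one> = u [^] N \<otimes> v [^] N" using pow_mult_distrib[OF assms(3,1,2), of N] assms(4) by simp
  then show ?thesis using assms(1,5) by simp
qed

lemma exp_lemma:
  assumes fin: "finite (carrier G)" and A: "subgroup A G"
    and ab: "\<And>u v. u \<in> A \<Longrightarrow> v \<in> A \<Longrightarrow> u \<otimes> v = v \<otimes> u"
    and x: "x \<in> A" and xmax: "\<And>z. z \<in> A \<Longrightarrow> ord z \<le> ord x" and y: "y \<in> A"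
  shows "ord y dvd ord x"
proof (rule ccontr)
  assume nd: "\<not> ord y dvd ord x"
  have xc: "x \<in> carrier G" using subgroup.mem_carrier[OF A x] .
  have yc: "y \<in> carrier G" using subgroup.mem_carrier[OF A y] .
  define m where "m = ord x"
  define oy where "oy = ord y"
  have m0: "m > 0" unfolding m_def using ord_pos[OF fin xc] .
  have oy0: "oy > 0" unfolding oy_def using ord_pos[OF fin yc] .
  obtain r where r: "Factorial_Ring.prime r" and rm: "\<not> multiplicity r oy \<le> multiplicity r m"
    using multiplicity_le_imp_dvd[of oy m] oy0 nd unfolding m_def oy_def by auto
  define b where "b = multiplicity r oy"
  define a0 where "a0 = multiplicity r m"
  have nu: "\<not> is_unit r" using prime_gt_1_nat[OF r] by simp
  have r1: "r > 1" using prime_gt_1_nat[OF r] .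
  have rb: "r^b dvd oy" unfolding b_def by (rule multiplicity_dvd)
  then obtain c where c: "oy = r^b * c" by (auto elim: dvdE)
  have c0: "c > 0" using c oy0 by (cases c) auto
  have cdiv: "oy div r^b = c" using c r1 by simp
  define y1 where "y1 = y [^] c"
  have y1A: "y1 \<in> A" unfolding y1_def using A y by (simp add: sub_pow_closed)
  have oy1: "ord y1 = r^b"
  proof -
    have "ord y1 = oy div c" unfolding y1_def oy_def
      by (rule ord_pow[OF yc]) (use c c0 oy_def in auto)
    then show ?thesis using c c0 by simp
  qed
  have ra: "r^a0 dvd m" unfolding a0_def by (rule multiplicity_dvd)
  then obtain m' where m': "m = r^a0 * m'" by (auto elim: dvdE)
  have m'0: "m' > 0" using m' m0 by (cases m') auto
  have nrm: "\<not> r dvd m'"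
  proof -
    have "m' = m div r^a0" using m' r1 by simp
    then show ?thesis unfolding a0_def using multiplicity_decompose[of m r] m0 nu by simp
  qed
  define x1 where "x1 = x [^] (r^a0)"
  have x1A: "x1 \<in> A" unfolding x1_def using A x by (simp add: sub_pow_closed)
  have ox1: "ord x1 = m'"
  proof -
    have "ord x1 = m div r^a0" unfolding x1_def m_def
      by (rule ord_pow[OF xc]) (use ra m_def r1 in auto)
    then show ?thesis using m' r1 by simp
  qed
  have x1c: "x1 \<in> carrier G" using subgroup.mem_carrier[OF A x1A] .
  have y1c: "y1 \<in> carrier G" using subgroup.mem_carrier[OF A y1A] .
  have com: "x1 \<otimes> y1 = y1 \<otimes> x1" using ab x1A y1A by blast
  define g where "g = x1 \<otimes> y1"
  have gA: "g \<in> A" unfolding g_def using A x1A y1A by (simp add: subgroup.m_closed)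
  have gc: "g \<in> carrier G" using subgroup.mem_carrier[OF A gA] .
  define K where "K = ord g"
  have cop: "coprime m' (r^b)" using prime_imp_coprime[OF r nrm] by (simp add: coprime_commute)
  have d1: "m' dvd K"
  proof -
    have "g [^] (K * r^b) = \<one>" unfolding K_def using gc by (simp add: pow_eq_id)
    moreover have "y1 [^] (K * r^b) = \<one>" using y1c oy1 by (simp add: pow_eq_id)
    ultimately have "x1 [^] (K * r^b) = \<one>" using comm_pow_one[OF x1c y1c com] g_def by blast
    then have "m' dvd K * r^b" using x1c ox1 by (simp add: pow_eq_id)
    then show ?thesis using cop by (simp add: coprime_dvd_mult_left_iff)
  qed
  have d2: "r^b dvd K"
  proof -
    have "g [^] (K * m') = \<one>" unfolding K_def using gc by (simp add: pow_eq_id)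
    moreover have "x1 [^] (K * m') = \<one>" using x1c ox1 by (simp add: pow_eq_id)
    ultimately have "y1 [^] (K * m') = \<one>" using comm_pow_one[OF y1c x1c com[symmetric]] unfolding g_def com by blast
    then have "r^b dvd K * m'" using y1c oy1 by (simp add: pow_eq_id)
    then show ?thesis using cop by (simp add: coprime_dvd_mult_left_iff coprime_commute)
  qed
  have "m' * r^b dvd K" using divides_mult[OF d1 d2 cop] .
  moreover have K0: "K > 0" unfolding K_def using ord_pos[OF fin gc] .
  ultimately have "m' * r^b \<le> K" by (simp add: dvd_imp_le)
  moreover have "K \<le> m" unfolding K_def m_def using xmax[OF gA] .
  moreover have "m < m' * r^b"
  proof -
    have "a0 < b" using rm unfolding a0_def b_def by simp
    then have "r^a0 < r^b" using r1 by (simp add: power_strict_increasing)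
    then have "r^a0 * m' < r^b * m'" using m'0 by simp
    then show ?thesis using m' by (simp add: mult.commute)
  qed
  ultimately show False by simp
qed

lemma cyc_crit:
  assumes fin: "finite (carrier G)" and A: "subgroup A G"
    and ab: "\<And>u v. u \<in> A \<Longrightarrow> v \<in> A \<Longrightarrow> u \<otimes> v = v \<otimes> u"
    and d: "d \<in> carrier G"
    and prim: "\<And>w q. w \<in> A \<Longrightarrow> Factorial_Ring.prime (q::nat) \<Longrightarrow> w [^] q = \<one> \<Longrightarrow> w \<in> generate G {d}"
  shows "\<exists>x\<in>A. A = generate G {x}"
proof -
  have Asub: "A \<subseteq> carrier G" using A subgroup.subset by blast
  have finA: "finite A" using fin Asub finite_subset by blast
  have oneA: "\<one> \<in> A" using A subgroup.one_closed by blast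
  define M where "M = Max (ord ` A)"
  have "M \<in> ord ` A" unfolding M_def using finA oneA by (intro Max_in) auto
  then obtain x where x: "x \<in> A" "ord x = M" by blast
  have xmax: "ord z \<le> ord x" if "z \<in> A" for z
    unfolding x(2) M_def using finA that by (intro Max_ge) auto
  have xc: "x \<in> carrier G" using subgroup.mem_carrier[OF A x(1)] .
  have genA: "generate G {x} \<subseteq> A" using x(1) A by (intro generate_subgroup_incl) auto
  have "A \<subseteq> generate G {x}"
  proof (rule ccontr)
    assume "\<not> A \<subseteq> generate G {x}"
    define S where "S = A - generate G {x}"
    have Sne: "S \<noteq> {}" using \<open>\<not> A \<subseteq> generate G {x}\<close> unfolding S_def by blast
    have finS: "finite S" unfolding S_def using finA by simp
    define L where "L = Min (ord ` S)"
    have "L \<in> ord ` S" unfolding L_def using finS Sne by (intro Min_in) auto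
    then obtain y where y: "y \<in> S" "ord y = L" by blast
    have ymin: "ord y \<le> ord z" if "z \<in> S" for z
      unfolding y(2) L_def using finS that by (intro Min_le) auto
    have yA: "y \<in> A" and yn: "y \<notin> generate G {x}" using y(1) unfolding S_def by auto
    have yc: "y \<in> carrier G" using subgroup.mem_carrier[OF A yA] .
    have "\<one> \<in> generate G {x}" by (rule generate.one)
    then have y1: "y \<noteq> \<one>" using yn by auto
    have oy0: "ord y > 0" using ord_pos[OF fin yc] .
    have "ord y \<noteq> 1" using y1 ord_eq_1[OF yc] by simp
    then obtain q where q: "Factorial_Ring.prime q" "q dvd ord y" using prime_factor_nat by blast
    have q1: "q > 1" using prime_gt_1_nat[OF q(1)] .
    have "ord (y [^] q) = ord y div q" using ord_pow[OF yc q(2)] q1 by simp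
    also have "\<dots> < ord y" using oy0 q1 by simp
    finally have "ord (y [^] q) < ord y" .
    moreover have yqA: "y [^] q \<in> A" using sub_pow_closed[OF A yA] .
    ultimately have "y [^] q \<in> generate G {x}" using ymin unfolding S_def by force
    then obtain j :: nat where j: "y [^] q = x [^] j" using gen_nat[OF fin xc] by blast
    define m where "m = ord x"
    have m0: "m > 0" unfolding m_def using ord_pos[OF fin xc] .
    have ym: "ord y dvd m" unfolding m_def by (rule exp_lemma[OF fin A ab x(1) xmax yA])
    have qm: "q dvd m" using q(2) ym dvd_trans by blast
    then obtain m'' where m'': "m = q * m''" by (auto elim: dvdE)
    have m''0: "m'' > 0" using m0 m'' by (cases m'') auto
    have "x [^] (j * m'') = (y [^] q) [^] m''" using j xc by (simp add: nat_pow_pow)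
    also have "\<dots> = y [^] m" using yc m'' by (simp add: nat_pow_pow)
    also have "\<dots> = \<one>" using ym yc by (simp add: pow_eq_id)
    finally have "m dvd j * m''" using xc unfolding m_def by (simp add: pow_eq_id)
    then have "q * m'' dvd j * m''" using m'' by simp
    then have "q dvd j" using m''0 by simp
    then obtain j' where j': "j = q * j'" by (auto elim: dvdE)
    define u where "u = inv (x [^] j')"
    have uA: "u \<in> A" unfolding u_def using A sub_pow_closed[OF A x(1)] by (simp add: subgroup.m_inv_closed)
    have uc: "u \<in> carrier G" using subgroup.mem_carrier[OF A uA] .
    define y'' where "y'' = y \<otimes> u"
    have y''A: "y'' \<in> A" unfolding y''_def using A yA uA by (simp add: subgroup.m_closed)
    have "y'' [^] q = y [^] q \<otimes> u [^] q"
      unfolding y''_def by (rule pow_mult_distrib[OF ab[OF yA uA] yc uc])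
    also have "u [^] q = inv (x [^] j)" unfolding u_def j' using xc
      by (simp add: nat_pow_inv[symmetric] nat_pow_pow mult.commute)
    finally have y''q: "y'' [^] q = \<one>" using j xc by simp
    have y''n: "y'' \<notin> generate G {x}"
    proof
      assume "y'' \<in> generate G {x}"
      moreover have "x [^] j' \<in> generate G {x}" using nat_in_gen[OF xc] .
      ultimately have "y'' \<otimes> x [^] j' \<in> generate G {x}" by (rule generate.eng)
      moreover have "y'' \<otimes> x [^] j' = y" unfolding y''_def u_def using yc xc
        by (simp add: m_assoc)
      ultimately show False using yn by simp
    qed
    define z where "z = x [^] m''"
    have zA: "z \<in> A" unfolding z_def using sub_pow_closed[OF A x(1)] .
    have "z [^] q = x [^] m" unfolding z_def using xc m'' by (simp add: nat_pow_pow mult.commute)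
    then have zq: "z [^] q = \<one>" using xc unfolding m_def by simp
    have zn: "z \<noteq> \<one>"
    proof
      assume "z = \<one>"
      then have "m dvd m''" unfolding z_def m_def using xc by (simp add: pow_eq_id)
      then have "m \<le> m''" using m''0 by (simp add: dvd_imp_le)
      then show False using m'' q1 m''0 by simp
    qed
    have "y'' \<in> generate G {d}" using prim[OF y''A q(1) y''q] .
    moreover have "z \<in> generate G {d}" using prim[OF zA q(1) zq] .
    ultimately obtain s :: nat where "y'' = z [^] s" using cyc_qtors[OF fin d _ _ q(1) zq y''q zn] by blast
    then have "y'' = x [^] (m'' * s)" unfolding z_def using xc by (simp add: nat_pow_pow)
    then have "y'' \<in> generate G {x}" using nat_in_gen[OF xc] by simp
    with y''n show False by simp
  qed
  then show ?thesis using genA x(1) by blast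
qed

end


context group begin

lemma cancel1 [simp]: "x \<in> carrier G \<Longrightarrow> y \<in> carrier G \<Longrightarrow> x \<otimes> (inv x \<otimes> y) = y"
  by (simp add: m_assoc[symmetric])
lemma cancel2 [simp]: "x \<in> carrier G \<Longrightarrow> y \<in> carrier G \<Longrightarrow> inv x \<otimes> (x \<otimes> y) = y"
  by (simp add: m_assoc[symmetric])

lemma conj_mem:
  "y \<in> g <# YY #> inv g \<longleftrightarrow> (\<exists>t\<in>YY. y = g \<otimes> t \<otimes> inv g)"
  unfolding l_coset_def r_coset_def by auto

lemma core_mem:
  "y \<in> core G H YY \<longleftrightarrow> (\<forall>h\<in>H. y \<in> h <# YY #> inv h)"
  unfolding core_def by auto

lemma set_mult_mem:
  "y \<in> XX <#> YY \<longleftrightarrow> (\<exists>x\<in>XX. \<exists>t\<in>YY. y = x \<otimes> t)"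
  unfolding set_mult_def by auto

lemma normalizer_mem:
  assumes "T \<subseteq> carrier G"
  shows "g \<in> normalizer G T \<longleftrightarrow> g \<in> carrier G \<and> g <# T #> inv g = T"
  using assms unfolding normalizer_def stabilizer_def by auto

lemma conj_pow:
  assumes "x \<in> carrier G" "c \<in> carrier G"
  shows "x \<otimes> c [^] (i::nat) \<otimes> inv x = (x \<otimes> c \<otimes> inv x) [^] i"
proof (induction i)
  case 0 then show ?case using assms by simp
next
  case (Suc i)
  have "x \<otimes> c [^] Suc i \<otimes> inv x = (x \<otimes> c [^] i \<otimes> inv x) \<otimes> (x \<otimes> c \<otimes> inv x)"
    using assms by (simp add: m_assoc)
  then show ?case using Suc by simp
qed

lemma conj_mult:
  assumes "x \<in> carrier G" "c \<in> carrier G" "d \<in> carrier G"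
  shows "x \<otimes> (c \<otimes> d) \<otimes> inv x = (x \<otimes> c \<otimes> inv x) \<otimes> (x \<otimes> d \<otimes> inv x)"
  using assms by (simp add: m_assoc)

end

locale cyc = group G for G (structure) +
  fixes C :: "'a set" and a :: 'a and n :: nat
  assumes fin: "finite (carrier G)"
    and Cn: "C \<lhd> G"
    and aG: "a \<in> carrier G"
    and Cg: "C = generate G {a}"
    and cC: "card C = n"
    and cent: "centralizer G C = C"
begin

definition acts :: "'a \<Rightarrow> nat \<Rightarrow> bool" where
  "acts x r \<longleftrightarrow> (\<forall>c\<in>C. x \<otimes> c \<otimes> inv x = c [^] r)"

lemma Csub: "subgroup C G" using Cn normal_imp_subgroup by blast
lemma C_carr: "C \<subseteq> carrier G" using Csub subgroup.subset by blast
lemma C_mem: "c \<in> C \<Longrightarrow> c \<in> carrier G" using C_carr by blast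
lemma aC: "a \<in> C" unfolding Cg by (rule generate.incl) simp
lemma ord_a: "ord a = n" using generate_pow_card[OF aG] Cg cC by simp
lemma n0: "n > 0" using ord_pos[OF fin aG] ord_a by simp

lemma C_pow: "c \<in> C \<Longrightarrow> \<exists>i::nat. c = a [^] i"
  using gen_nat[OF fin aG] Cg by blast

lemma pow_C: "a [^] (i::nat) \<in> C" using nat_in_gen[OF aG] Cg by simp

lemma Cpow_closed: "c \<in> C \<Longrightarrow> c [^] (i::nat) \<in> C" using sub_pow_closed[OF Csub] by blast

lemma C_comm: assumes "c \<in> C" "d \<in> C" shows "c \<otimes> d = d \<otimes> c"
proof -
  obtain i j :: nat where "c = a [^] i" "d = a [^] j" using C_pow assms by blast
  then show ?thesis using aG by (simp add: nat_pow_mult add.commute)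
qed

lemma conj_C: "x \<in> carrier G \<Longrightarrow> c \<in> C \<Longrightarrow> x \<otimes> c \<otimes> inv x \<in> C"
  using normal.inv_op_closed2[OF Cn] by blast

lemma cent_in:
  assumes "x \<in> carrier G" "\<And>c. c \<in> C \<Longrightarrow> x \<otimes> c = c \<otimes> x"
  shows "x \<in> C"
  using assms cent unfolding centralizer_def by auto

lemma a_pow_one: "a [^] (i::nat) = \<one> \<longleftrightarrow> n dvd i"
  using pow_eq_id[OF aG] ord_a by simp

lemma a_int_pow_eq: "a [^] (i::int) = a [^] (j::int) \<longleftrightarrow> int n dvd j - i"
  using int_pow_eq[OF aG] ord_a by simp

lemma pow_C_cong:
  assumes "c \<in> C" "[r = r'] (mod n)"
  shows "c [^] (r::nat) = c [^] r'"
proof -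
  obtain i :: nat where i: "c = a [^] i" using C_pow assms(1) by blast
  have "[i * r = i * r'] (mod ord a)" using assms(2) ord_a by (simp add: cong_scalar_left)
  then have "a [^] (i * r) = a [^] (i * r')" by (rule pow_eq_cong[OF aG])
  then show ?thesis using i aG by (simp add: nat_pow_pow)
qed

lemma power_map: assumes "x \<in> carrier G" shows "\<exists>r. acts x r \<and> r \<ge> 1"
proof -
  have "x \<otimes> a \<otimes> inv x \<in> C" using conj_C[OF assms aC] .
  then obtain r0 :: nat where r0: "x \<otimes> a \<otimes> inv x = a [^] r0" using C_pow by blast
  define r where "r = r0 + n"
  have ar: "x \<otimes> a \<otimes> inv x = a [^] r"
    unfolding r0 r_def using aG by (simp add: nat_pow_mult[symmetric] ord_a[symmetric])
  have "acts x r" unfolding acts_def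
  proof
    fix c assume "c \<in> C"
    then obtain i :: nat where i: "c = a [^] i" using C_pow by blast
    have "x \<otimes> c \<otimes> inv x = (a [^] r) [^] i" unfolding i ar[symmetric] using conj_pow[OF assms aG] .
    also have "\<dots> = c [^] r" unfolding i using aG by (simp add: nat_pow_pow mult.commute)
    finally show "x \<otimes> c \<otimes> inv x = c [^] r" .
  qed
  moreover have "r \<ge> 1" unfolding r_def using n0 by simp
  ultimately show ?thesis by blast
qed

lemma acts_a: assumes "x \<in> carrier G" "x \<otimes> a \<otimes> inv x = a [^] (r::nat)" shows "acts x r"
  unfolding acts_def
proof
  fix c assume "c \<in> C"
  then obtain i :: nat where i: "c = a [^] i" using C_pow by blast
  have "x \<otimes> c \<otimes> inv x = (a [^] r) [^] i" unfolding i assms(2)[symmetric] using conj_pow[OF assms(1) aG] .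
  also have "\<dots> = c [^] r" unfolding i using aG by (simp add: nat_pow_pow mult.commute)
  finally show "x \<otimes> c \<otimes> inv x = c [^] r" .
qed

lemma acts_conj:
  assumes "acts x r" "x \<in> carrier G" "h \<in> carrier G"
  shows "acts (h \<otimes> x \<otimes> inv h) r"
  unfolding acts_def
proof
  fix c assume c: "c \<in> C"
  have cc: "c \<in> carrier G" using C_mem c .
  have d: "inv h \<otimes> c \<otimes> h \<in> C" using conj_C[of "inv h" c] c assms(3) by simp
  have "h \<otimes> x \<otimes> inv h \<otimes> c \<otimes> inv (h \<otimes> x \<otimes> inv h) = h \<otimes> (x \<otimes> (inv h \<otimes> c \<otimes> h) \<otimes> inv x) \<otimes> inv h"
    using assms cc by (simp add: m_assoc inv_mult_group)
  also have "\<dots> = h \<otimes> (inv h \<otimes> c \<otimes> h) [^] r \<otimes> inv h"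
    using assms(1) d unfolding acts_def by simp
  also have "\<dots> = (h \<otimes> (inv h \<otimes> c \<otimes> h) \<otimes> inv h) [^] r"
    using conj_pow assms(3) d C_mem by blast
  also have "h \<otimes> (inv h \<otimes> c \<otimes> h) \<otimes> inv h = c" using assms(3) cc by (simp add: m_assoc)
  finally show "h \<otimes> x \<otimes> inv h \<otimes> c \<otimes> inv (h \<otimes> x \<otimes> inv h) = c [^] r" .
qed

lemma acts_same:
  assumes "acts x r" "acts y r" "x \<in> carrier G" "y \<in> carrier G"
  shows "x \<otimes> inv y \<in> C"
proof (rule cent_in)
  show "x \<otimes> inv y \<in> carrier G" using assms by simp
  fix c assume c: "c \<in> C"
  have cc: "c \<in> carrier G" using C_mem c .
  define d where "d = inv y \<otimes> c \<otimes> y"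
  have dC: "d \<in> C" unfolding d_def using conj_C[of "inv y" c] c assms(4) by simp
  have dc: "d \<in> carrier G" using C_mem dC .
  have "y \<otimes> d \<otimes> inv y = c" unfolding d_def using assms(4) cc by (simp add: m_assoc)
  then have e1: "d [^] r = c" using assms(2) dC unfolding acts_def by simp
  have "x \<otimes> d \<otimes> inv x = c" using assms(1) dC e1 unfolding acts_def by simp
  then have "x \<otimes> inv y \<otimes> c \<otimes> y \<otimes> inv x = c" unfolding d_def using assms cc by (simp add: m_assoc)
  then have "x \<otimes> inv y \<otimes> c \<otimes> y \<otimes> inv x \<otimes> x \<otimes> inv y = c \<otimes> x \<otimes> inv y" by simp
  then show "x \<otimes> inv y \<otimes> c = c \<otimes> (x \<otimes> inv y)" using assms cc by (simp add: m_assoc)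
qed

lemma acts_pow:
  assumes "acts x r" "x \<in> carrier G"
  shows "acts (x [^] (i::nat)) (r ^ i)"
proof (induction i)
  case 0 then show ?case unfolding acts_def using C_mem by simp
next
  case (Suc i)
  show ?case unfolding acts_def
  proof
    fix c assume c: "c \<in> C"
    have cc: "c \<in> carrier G" using C_mem c .
    have "x [^] Suc i \<otimes> c \<otimes> inv (x [^] Suc i) = x [^] i \<otimes> (x \<otimes> c \<otimes> inv x) \<otimes> inv (x [^] i)"
      using assms(2) cc by (simp add: m_assoc inv_mult_group)
    also have "\<dots> = x [^] i \<otimes> c [^] r \<otimes> inv (x [^] i)" using assms(1) c unfolding acts_def by simp
    also have "\<dots> = (c [^] r) [^] (r ^ i)" using Suc Cpow_closed[OF c] unfolding acts_def by simp
    also have "\<dots> = c [^] (r ^ Suc i)" using cc by (simp add: nat_pow_pow)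
    finally show "x [^] Suc i \<otimes> c \<otimes> inv (x [^] Suc i) = c [^] (r ^ Suc i)" .
  qed
qed

lemma pow_formula:
  assumes "acts x r" "x \<in> carrier G" "c \<in> C"
  shows "(c \<otimes> x) [^] (i::nat) = c [^] (\<Sum>j<i. r^j) \<otimes> x [^] i"
proof (induction i)
  case 0 then show ?case using assms C_mem by simp
next
  case (Suc i)
  have cc: "c \<in> carrier G" using C_mem assms(3) .
  define s where "s = (\<Sum>j<i. r^j)"
  have cs: "c [^] s \<in> C" using Cpow_closed[OF assms(3)] .
  have "(c \<otimes> x) [^] Suc i = (c \<otimes> x) \<otimes> (c \<otimes> x) [^] i" using nat_pow_Suc2[of "c \<otimes> x" i] assms cc by simp
  also have "\<dots> = c \<otimes> (x \<otimes> c [^] s \<otimes> inv x) \<otimes> x [^] Suc i"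
  proof -
    have xc: "x [^] i \<otimes> x = x \<otimes> x [^] i" using nat_pow_Suc2[OF assms(2), of i] by simp
    have "(c \<otimes> x) \<otimes> (c \<otimes> x) [^] i = c \<otimes> (x \<otimes> c [^] s \<otimes> inv x) \<otimes> (x \<otimes> x [^] i)"
      using Suc assms(2) cc unfolding s_def by (simp add: m_assoc)
    then show ?thesis using nat_pow_Suc2[OF assms(2), of i] by simp
  qed
  also have "x \<otimes> c [^] s \<otimes> inv x = (c [^] s) [^] r" using assms(1) cs unfolding acts_def by simp
  also have "c \<otimes> (c [^] s) [^] r = c [^] (\<Sum>j<Suc i. r^j)"
  proof -
    have "(\<Sum>j<Suc i. r^j) = 1 + r * s" unfolding s_def
      by (simp only: sum.lessThan_Suc_shift) (simp add: sum_distrib_left)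
    then show ?thesis using cc by (simp add: nat_pow_pow nat_pow_Suc2[symmetric] mult.commute)
  qed
  finally show ?case .
qed

lemma acts_mult_C:
  assumes "acts x r" "x \<in> carrier G" "c \<in> C"
  shows "acts (c \<otimes> x) r"
  unfolding acts_def
proof
  fix d assume d: "d \<in> C"
  have cc: "c \<in> carrier G" "d \<in> carrier G" using C_mem assms(3) d by auto
  have "c \<otimes> x \<otimes> d \<otimes> inv (c \<otimes> x) = c \<otimes> (x \<otimes> d \<otimes> inv x) \<otimes> inv c"
    using assms(2) cc by (simp add: m_assoc inv_mult_group)
  also have "\<dots> = c \<otimes> d [^] r \<otimes> inv c" using assms(1) d unfolding acts_def by simp
  also have "\<dots> = d [^] r" using C_comm[OF assms(3) Cpow_closed[OF d]] cc by (simp add: m_assoc)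
  finally show "c \<otimes> x \<otimes> d \<otimes> inv (c \<otimes> x) = d [^] r" .
qed

end


context cyc begin

lemma T_cap_C:
  assumes T: "subgroup T G" and core1: "core G (carrier G) T = {\<one>}"
    and tT: "t \<in> T" and tC: "t \<in> C"
  shows "t = \<one>"
proof -
  have "t \<in> core G (carrier G) T" unfolding core_mem
  proof
    fix h assume h: "h \<in> carrier G"
    obtain r where r: "acts (inv h) r" using power_map[of "inv h"] h by auto
    have "inv h \<otimes> t \<otimes> h = t [^] r" using r tC h unfolding acts_def by simp
    then have w: "inv h \<otimes> t \<otimes> h \<in> T" using sub_pow_closed[OF T tT] by simp
    have "t = h \<otimes> (inv h \<otimes> t \<otimes> h) \<otimes> inv h" using h C_mem[OF tC] by (simp add: m_assoc)
    then show "t \<in> h <# T #> inv h" unfolding conj_mem using w by blast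
  qed
  then show ?thesis using core1 by simp
qed

theorem part2:
  assumes hyp: "\<And>p. Factorial_Ring.prime p \<Longrightarrow> p^2 dvd n \<Longrightarrow>
         \<not> (\<exists>g\<in>carrier G. \<forall>x\<in>sylow_part G C p. g \<otimes> x \<otimes> inv g = x [^] (1 + p ^ (multiplicity p n - 1)))"
    and m2: "multiplicity (2::nat) n \<noteq> 2"
    and exp: "expansive G T" and Tn: "T \<noteq> {\<one>}" and core1: "core G (carrier G) T = {\<one>}"
  shows False
proof -
  have T: "subgroup T G" using exp unfolding expansive_def by blast
  have Tc: "T \<subseteq> carrier G" using T subgroup.subset by blast
  have Tm: "t \<in> T \<Longrightarrow> t \<in> carrier G" for t using Tc by blast
  have TC: "t \<in> T \<Longrightarrow> t \<in> C \<Longrightarrow> t = \<one>" for t using T_cap_C[OF T core1] by blast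
  define N where "N = normalizer G T"
  have Nsub: "subgroup N G" unfolding N_def using normalizer_imp_subgroup[OF Tc] .
  have aN: "a \<notin> N"
  proof
    assume "a \<in> N"
    then have aT: "a <# T #> inv a = T" unfolding N_def using normalizer_mem[OF Tc] by blast
    have "t = \<one>" if tT: "t \<in> T" for t
    proof -
      have tc: "t \<in> carrier G" using Tm tT .
      have "a \<otimes> t \<otimes> inv a \<in> T" using aT tT conj_mem[of "a \<otimes> t \<otimes> inv a" a T] by auto
      then have w1: "a \<otimes> t \<otimes> inv a \<otimes> inv t \<in> T" using T tT by (simp add: subgroup.m_closed subgroup.m_inv_closed)
      have "t \<otimes> inv a \<otimes> inv t \<in> C" using conj_C[OF tc] subgroup.m_inv_closed[OF Csub aC] by simp
      then have "a \<otimes> (t \<otimes> inv a \<otimes> inv t) \<in> C" using aC Csub by (simp add: subgroup.m_closed)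
      then have "a \<otimes> t \<otimes> inv a \<otimes> inv t \<in> C" using aG tc by (simp add: m_assoc)
      then have "a \<otimes> t \<otimes> inv a \<otimes> inv t = \<one>" using TC w1 by blast
      then have "(a \<otimes> t \<otimes> inv a \<otimes> inv t) \<otimes> (t \<otimes> a) = t \<otimes> a" using aG tc by simp
      then have at: "a \<otimes> t = t \<otimes> a" using aG tc by (simp add: m_assoc)
      have "t \<in> C"
      proof (rule cent_in[OF tc])
        fix c assume "c \<in> C"
        then obtain i :: nat where "c = a [^] i" using C_pow by blast
        then show "t \<otimes> c = c \<otimes> t" using group_commutes_pow[OF at aG tc, of i] by simp
      qed
      then show ?thesis using TC tT by blast
    qed
    then have "T \<subseteq> {\<one>}" by blast
    moreover have "\<one> \<in> T" using T subgroup.one_closed by blast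
    ultimately show False using Tn by blast
  qed
  define YY where "YY = ((a <# T #> inv a) \<inter> N) <#> T"
  have "T \<subset> core G N YY" using exp aN aG unfolding expansive_def N_def YY_def by blast
  then obtain k where kc: "k \<in> core G N YY" and kT: "k \<notin> T" by blast
  have "\<one> \<in> N" using Nsub subgroup.one_closed by blast
  then have "k \<in> \<one> <# YY #> inv \<one>" using kc core_mem by blast
  then obtain y where yY: "y \<in> YY" and ky: "k = \<one> \<otimes> y \<otimes> inv \<one>" unfolding conj_mem by blast
  obtain x t where xA: "x \<in> a <# T #> inv a" and xN: "x \<in> N" and tT: "t \<in> T" and yx: "y = x \<otimes> t"
    using yY unfolding YY_def set_mult_mem by blast
  obtain s where sT: "s \<in> T" and xs: "x = a \<otimes> s \<otimes> inv a" using xA unfolding conj_mem by blast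
  have sc: "s \<in> carrier G" using Tm sT .
  have xc: "x \<in> carrier G" using xs sc aG by simp
  have tc: "t \<in> carrier G" using Tm tT .
  have xT: "x \<notin> T"
  proof
    assume "x \<in> T"
    then have "x \<otimes> t \<in> T" using T tT by (simp add: subgroup.m_closed)
    then show False using kT ky yx xc tc by simp
  qed
  obtain e where e: "acts s e" and e1: "e \<ge> 1" using power_map[OF sc] by blast
  define c where "c = a \<otimes> inv (a [^] e)"
  have sa: "s \<otimes> inv a \<otimes> inv s = inv (a [^] e)"
  proof -
    have "s \<otimes> inv a \<otimes> inv s = (inv a) [^] e" using e subgroup.m_inv_closed[OF Csub aC] unfolding acts_def by simp
    then show ?thesis using aG by (simp add: nat_pow_inv)
  qed
  have cinC: "c \<in> C" unfolding c_def
    using aC Csub Cpow_closed[OF aC, of e] by (simp add: subgroup.m_closed subgroup.m_inv_closed)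
  have ccar: "c \<in> carrier G" using C_mem cinC .
  have xcs: "x = c \<otimes> s"
  proof -
    have "c \<otimes> s = a \<otimes> (s \<otimes> inv a \<otimes> inv s) \<otimes> s" unfolding c_def sa ..
    also have "\<dots> = a \<otimes> s \<otimes> inv a" using aG sc by (simp add: m_assoc)
    finally show ?thesis using xs by simp
  qed
  have c1: "c \<noteq> \<one>" using xT xcs sT sc by auto
  have "x \<otimes> s \<otimes> inv x \<in> T"
  proof -
    have "x <# T #> inv x = T" using xN unfolding N_def using normalizer_mem[OF Tc] by blast
    then show ?thesis using sT conj_mem[of "x \<otimes> s \<otimes> inv x" x T] by auto
  qed
  moreover have "x \<otimes> s \<otimes> inv x = c \<otimes> (s \<otimes> inv c \<otimes> inv s) \<otimes> s"
    unfolding xcs using ccar sc by (simp add: m_assoc inv_mult_group)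
  ultimately have "c \<otimes> (s \<otimes> inv c \<otimes> inv s) \<otimes> s \<otimes> inv s \<in> T" using T sT
    by (simp add: subgroup.m_closed subgroup.m_inv_closed)
  moreover have "c \<otimes> (s \<otimes> inv c \<otimes> inv s) \<otimes> s \<otimes> inv s = c \<otimes> (s \<otimes> inv c \<otimes> inv s)"
    using ccar sc by (simp add: m_assoc)
  moreover have "s \<otimes> inv c \<otimes> inv s = inv (c [^] e)"
  proof -
    have "s \<otimes> inv c \<otimes> inv s = (inv c) [^] e" using e subgroup.m_inv_closed[OF Csub cinC] unfolding acts_def by simp
    then show ?thesis using ccar by (simp add: nat_pow_inv)
  qed
  ultimately have "c \<otimes> inv (c [^] e) \<in> T" by simp
  moreover have "c \<otimes> inv (c [^] e) \<in> C" using cinC Csub Cpow_closed[OF cinC, of e]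
    by (simp add: subgroup.m_closed subgroup.m_inv_closed)
  ultimately have "c \<otimes> inv (c [^] e) = \<one>" using TC by blast
  then have "inv (inv (c [^] e)) = c" using ccar by (intro inv_equality) simp_all
  then have cce: "c [^] e = c" using ccar by simp
  have cint: "c = a [^] (1 - int e)"
    unfolding c_def using aG by (simp add: int_pow_diff int_pow_int)
  have "a [^] ((1 - int e) * int e) = a [^] (1 - int e)"
    using cce cint aG by (simp add: int_pow_pow[symmetric] int_pow_int)
  then have d1: "int n dvd (1 - int e) - (1 - int e) * int e" using a_int_pow_eq by blast
  have "a [^] (1 - int e) \<noteq> a [^] (0::int)" using c1 cint by simp
  then have d2: "\<not> int n dvd 0 - (1 - int e)" using a_int_pow_eq by blast
  have "int n dvd int ((e - 1)^2)"
  proof -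
    have ie: "int (e-1) = int e - 1" using e1 by simp
    have "int ((e-1)^2) = (int e - 1)^2" unfolding of_nat_power ie ..
    then have "(1 - int e) - (1 - int e) * int e = int ((e - 1)^2)"
      by (simp add: power2_eq_square algebra_simps)
    then show ?thesis using d1 by simp
  qed
  then have nd1: "n dvd (e-1)^2" by (simp only: int_dvd_int_iff)
  have nd2: "\<not> n dvd (e - 1)"
  proof
    assume "n dvd (e - 1)"
    then have "int n dvd int (e - 1)" by simp
    moreover have "int (e - 1) = 0 - (1 - int e)" using e1 by (simp add: of_nat_diff)
    ultimately show False using d2 by simp
  qed
  obtain p M where p: "Factorial_Ring.prime p" and p2: "p^2 dvd n"
    and cg: "[e^M = 1 + p^(multiplicity p n - 1)] (mod p^(multiplicity p n))"
    using nt_part2[OF n0 e1 nd1 nd2 m2] by blast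
  have "\<exists>g\<in>carrier G. \<forall>x\<in>sylow_part G C p. g \<otimes> x \<otimes> inv g = x [^] (1 + p ^ (multiplicity p n - 1))"
  proof (intro bexI ballI)
    fix z assume z: "z \<in> sylow_part G C p"
    then have zC: "z \<in> C" and zp: "z [^] (p ^ multiplicity p n) = \<one>"
      unfolding sylow_part_def cC by auto
    have zc: "z \<in> carrier G" using C_mem zC .
    have "ord z dvd p ^ multiplicity p n" using zp zc by (simp add: pow_eq_id)
    then have "[e^M = 1 + p^(multiplicity p n - 1)] (mod ord z)" using cg cong_dvd_modulus_nat by blast
    then have "z [^] (e^M) = z [^] (1 + p^(multiplicity p n - 1))" by (rule pow_eq_cong[OF zc])
    moreover have "s [^] M \<otimes> z \<otimes> inv (s [^] M) = z [^] (e^M)"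
      using acts_pow[OF e sc, of M] zC unfolding acts_def by simp
    ultimately show "s [^] M \<otimes> z \<otimes> inv (s [^] M) = z [^] (1 + p ^ (multiplicity p n - 1))" by simp
  next
    show "s [^] M \<in> carrier G" using sc by simp
  qed
  then show False using hyp[OF p p2] by blast
qed

end


context group begin

lemma cyclic_of_gen:
  assumes A: "subgroup A G" and x: "x \<in> carrier G" and Ax: "A = generate G {x}"
  shows "cyclic_group (subgroup_generated G A)"
proof -
  have 1: "generate G (carrier G \<inter> A) = A"
    using subgroup.carrier_subgroup_generated_subgroup[OF A] carrier_subgroup_generated[of G A] by simp
  have 2: "carrier G \<inter> {x} = {x}" using x by auto
  have "subgroup_generated G A = subgroup_generated G {x}"
    unfolding subgroup_generated_def 1 2 Ax[symmetric] ..
  then show ?thesis using cyclic_group_generated by simp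
qed

lemma gen_of_cyclic:
  assumes H: "subgroup H G" and cy: "cyclic_group (subgroup_generated G H)"
  shows "\<exists>x\<in>H. H = generate G {x}"
proof -
  interpret SG: group "subgroup_generated G H" by simp
  obtain x where x: "x \<in> carrier (subgroup_generated G H)"
    and cx: "carrier (subgroup_generated G H) = range (\<lambda>n::int. x [^]\<^bsub>subgroup_generated G H\<^esub> n)"
    using cy SG.cyclic_group by blast
  have cH: "carrier (subgroup_generated G H) = H" using subgroup.carrier_subgroup_generated_subgroup[OF H] .
  have xH: "x \<in> H" using x cH by simp
  have xc: "x \<in> carrier G" using subgroup.mem_carrier[OF H xH] .
  have "H = range (\<lambda>n::int. x [^] n)" using cx cH int_pow_subgroup_generated[OF x] by simp
  also have "\<dots> = generate G {x}" using generate_pow[OF xc] by auto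
  finally show ?thesis using xH by blast
qed

end

context cyc begin

lemma comm_norm:
  assumes t: "t \<in> carrier G" and c: "c \<in> carrier G" and ct: "c \<otimes> t = t \<otimes> c"
  shows "c \<in> normalizer G (generate G {t})"
proof -
  have Tc: "generate G {t} \<subseteq> carrier G" using generate_incl t by blast
  have "c <# generate G {t} #> inv c = generate G {t}"
  proof
    show "c <# generate G {t} #> inv c \<subseteq> generate G {t}"
    proof
      fix y assume "y \<in> c <# generate G {t} #> inv c"
      then obtain w where w: "w \<in> generate G {t}" "y = c \<otimes> w \<otimes> inv c" unfolding conj_mem by blast
      obtain i :: nat where i: "w = t [^] i" using gen_nat[OF fin t w(1)] by blast
      have "c \<otimes> t [^] i = t [^] i \<otimes> c" using group_commutes_pow[OF ct[symmetric] t c, of i] by simp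
      then have "y = w" using w(2) i c t by (simp add: m_assoc)
      then show "y \<in> generate G {t}" using w by simp
    qed
    show "generate G {t} \<subseteq> c <# generate G {t} #> inv c"
    proof
      fix w assume w: "w \<in> generate G {t}"
      obtain i :: nat where i: "w = t [^] i" using gen_nat[OF fin t w] by blast
      have "c \<otimes> t [^] i = t [^] i \<otimes> c" using group_commutes_pow[OF ct[symmetric] t c, of i] by simp
      then have "w = c \<otimes> w \<otimes> inv c" using i c t by (simp add: m_assoc)
      then show "w \<in> c <# generate G {t} #> inv c" unfolding conj_mem using w by blast
    qed
  qed
  then show ?thesis using normalizer_mem[OF Tc] c by blast
qed

theorem part3:
  assumes nr: "\<not> roquette G"
  shows "\<exists>T. expansive G T \<and> T \<noteq> {\<one>} \<and> core G (carrier G) T = {\<one>}"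
proof -
  obtain A where An: "A \<lhd> G" and Ab: "\<And>x y. x \<in> A \<Longrightarrow> y \<in> A \<Longrightarrow> x \<otimes> y = y \<otimes> x"
    and Anc: "\<not> cyclic_group (subgroup_generated G A)"
    using nr unfolding roquette_def by blast
  have As: "subgroup A G" using An normal_imp_subgroup by blast
  have "\<exists>t\<in>A. \<exists>p. Factorial_Ring.prime (p::nat) \<and> t [^] p = \<one> \<and> t \<notin> C"
  proof (rule ccontr)
    assume nt: "\<not> ?thesis"
    have "\<exists>x\<in>A. A = generate G {x}"
    proof (rule cyc_crit[OF fin As Ab aG])
      fix w q assume "w \<in> A" "Factorial_Ring.prime (q::nat)" "w [^] q = \<one>"
      then show "w \<in> generate G {a}" using nt Cg by blast
    qed
    then obtain x where "x \<in> A" "A = generate G {x}" by blast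
    then have "cyclic_group (subgroup_generated G A)"
      using cyclic_of_gen[OF As] subgroup.mem_carrier[OF As] by blast
    with Anc show False by simp
  qed
  then obtain t p where tA: "t \<in> A" and p: "Factorial_Ring.prime (p::nat)" and tp: "t [^] p = \<one>"
    and tnC: "t \<notin> C" by blast
  have tc: "t \<in> carrier G" using subgroup.mem_carrier[OF As tA] .
  have oneC: "\<one> \<in> C" using Csub subgroup.one_closed by blast
  have t1: "t \<noteq> \<one>" using tnC oneC by blast
  have ordt: "ord t = p"
  proof -
    have "ord t dvd p" using tp tc by (simp add: pow_eq_id)
    then have "ord t = 1 \<or> ord t = p" using p by (simp add: prime_nat_iff)
    moreover have "ord t \<noteq> 1" using t1 ord_eq_1[OF tc] by simp
    ultimately show ?thesis by blast
  qed
  define T where "T = generate G {t}"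
  have Ts: "subgroup T G" unfolding T_def using generate_is_subgroup tc by simp
  have Tc: "T \<subseteq> carrier G" using Ts subgroup.subset by blast
  have tT: "t \<in> T" unfolding T_def by (rule generate.incl) simp
  have Tel: "\<And>w. w \<in> T \<Longrightarrow> \<exists>i::nat. w = t [^] i" unfolding T_def using gen_nat[OF fin tc] by blast
  have tpowT: "\<And>i::nat. t [^] i \<in> T" unfolding T_def using nat_in_gen[OF tc] by blast
  have Tinv: "\<exists>j::nat. w [^] j = t" if w: "w \<in> T" "w \<noteq> \<one>" for w
  proof -
    obtain i :: nat where i: "w = t [^] i" using Tel w(1) by blast
    have "\<not> p dvd i" using w(2) i tc ordt by (simp add: pow_eq_id)
    then have "coprime i p" using prime_imp_coprime[OF p] by (simp add: coprime_commute)
    then obtain j where j: "[i * j = Suc 0] (mod p)" using cong_solve_coprime_nat by blast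
    have "t [^] (i * j) = t [^] (Suc 0)" using pow_eq_cong[OF tc] j ordt by simp
    then show ?thesis using i tc by (auto simp: nat_pow_pow)
  qed
  have TC: "w = \<one>" if wT: "w \<in> T" and wC: "w \<in> C" for w
  proof (rule ccontr)
    assume "w \<noteq> \<one>"
    then obtain j :: nat where "w [^] j = t" using Tinv wT by blast
    then have "t \<in> C" using Cpow_closed[OF wC, of j] by simp
    with tnC show False by simp
  qed
  have core1: "core G (carrier G) T = {\<one>}"
  proof
    show "{\<one>} \<subseteq> core G (carrier G) T"
    proof
      fix y assume "y \<in> {\<one>}"
      then have y: "y = \<one>" by simp
      show "y \<in> core G (carrier G) T" unfolding core_mem
      proof
        fix h assume h: "h \<in> carrier G"
        have "\<one> \<in> T" using Ts subgroup.one_closed by blast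
        moreover have "y = h \<otimes> \<one> \<otimes> inv h" using y h by simp
        ultimately show "y \<in> h <# T #> inv h" unfolding conj_mem by blast
      qed
    qed
    show "core G (carrier G) T \<subseteq> {\<one>}"
    proof
      fix y assume yc: "y \<in> core G (carrier G) T"
      then have "y \<in> \<one> <# T #> inv \<one>" unfolding core_mem by blast
      then obtain w where "w \<in> T" "y = \<one> \<otimes> w \<otimes> inv \<one>" unfolding conj_mem by blast
      then have yT: "y \<in> T" and ycar: "y \<in> carrier G" using Tc by auto
      show "y \<in> {\<one>}"
      proof (rule ccontr)
        assume "y \<notin> {\<one>}"
        then obtain j :: nat where j: "y [^] j = t" using Tinv yT by blast
        have "t \<in> C"
        proof (rule cent_in[OF tc])
          fix c assume cC: "c \<in> C"
          have cc: "c \<in> carrier G" using C_mem cC .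
          have "inv c \<in> carrier G" using cc by simp
          then have "y \<in> inv c <# T #> inv (inv c)" using yc unfolding core_mem by blast
          then obtain w where wT: "w \<in> T" and yw: "y = inv c \<otimes> w \<otimes> inv (inv c)" unfolding conj_mem by blast
          have wc: "w \<in> carrier G" using Tc wT by blast
          have "c \<otimes> y \<otimes> inv c = w" using yw cc wc by (simp add: m_assoc)
          then have "c \<otimes> t \<otimes> inv c = w [^] j" using conj_pow[OF cc ycar, of j] j by simp
          then have ctT: "c \<otimes> t \<otimes> inv c \<in> T" using sub_pow_closed[OF Ts wT] by simp
          have "c \<otimes> t \<otimes> inv c \<otimes> inv t \<in> T" using Ts ctT tT by (simp add: subgroup.m_closed subgroup.m_inv_closed)
          moreover have "c \<otimes> (t \<otimes> inv c \<otimes> inv t) \<in> C"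
            using conj_C[OF tc] subgroup.m_inv_closed[OF Csub cC] Csub cC by (simp add: subgroup.m_closed)
          then have "c \<otimes> t \<otimes> inv c \<otimes> inv t \<in> C" using cc tc by (simp add: m_assoc)
          ultimately have "c \<otimes> t \<otimes> inv c \<otimes> inv t = \<one>" using TC by blast
          then have "(c \<otimes> t \<otimes> inv c \<otimes> inv t) \<otimes> (t \<otimes> c) = t \<otimes> c" using cc tc by simp
          then show "t \<otimes> c = c \<otimes> t" using cc tc by (simp add: m_assoc)
        qed
        with tnC show False by simp
      qed
    qed
  qed
  have Texp: "expansive G T"
    unfolding expansive_def
  proof (intro conjI ballI)
    show "subgroup T G" by (rule Ts)
    fix g assume g: "g \<in> carrier G - normalizer G T"
    define N where "N = normalizer G T"
    have gc: "g \<in> carrier G" and gN: "g \<notin> N" using g unfolding N_def by auto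
    have Nsub: "subgroup N G" unfolding N_def using normalizer_imp_subgroup[OF Tc] .
    obtain e where e: "acts t e" using power_map[OF tc] by blast
    define g1 where "g1 = g \<otimes> t \<otimes> inv g"
    have g1c: "g1 \<in> carrier G" unfolding g1_def using gc tc by simp
    have g1e: "acts g1 e" unfolding g1_def using acts_conj[OF e tc gc] .
    define c0 where "c0 = g1 \<otimes> inv t"
    have c0C: "c0 \<in> C" unfolding c0_def using acts_same[OF g1e e g1c tc] .
    have c0c: "c0 \<in> carrier G" using C_mem c0C .
    have g1A: "g1 \<in> A" unfolding g1_def using normal.inv_op_closed2[OF An gc tA] .
    have c0A: "c0 \<in> A" unfolding c0_def using As g1A tA by (simp add: subgroup.m_closed subgroup.m_inv_closed)
    have c0t: "c0 \<otimes> t = t \<otimes> c0" using Ab[OF c0A tA] .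
    have g1ct: "g1 = c0 \<otimes> t" unfolding c0_def using g1c tc by (simp add: m_assoc)
    have c01: "c0 \<noteq> \<one>"
    proof
      assume "c0 = \<one>"
      then have "g1 = t" using g1ct tc by simp
      then have "g \<otimes> t \<otimes> inv g \<otimes> g = t \<otimes> g" unfolding g1_def by simp
      then have "g \<otimes> t = t \<otimes> g" using gc tc by (simp add: m_assoc)
      then have "g \<in> N" unfolding N_def T_def using comm_norm[OF tc gc] by blast
      with gN show False by simp
    qed
    have c0p: "c0 [^] p = \<one>"
    proof -
      have "g1 [^] p = \<one>" unfolding g1_def using conj_pow[OF gc tc, of p] tp gc by simp
      moreover have "g1 [^] p = c0 [^] p \<otimes> t [^] p" unfolding g1ct by (rule pow_mult_distrib[OF c0t c0c tc])
      ultimately show ?thesis using tp c0c by simp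
    qed
    have c0N: "c0 \<in> N" unfolding N_def T_def using comm_norm[OF tc c0c c0t] .
    have tN: "t \<in> N" unfolding N_def T_def using comm_norm[OF tc tc] by simp
    define YY where "YY = ((g <# T #> inv g) \<inter> N) <#> T"
    define XX where "XX = {w. \<exists>(i::nat) (j::nat). w = c0 [^] i \<otimes> t [^] j}"
    have XXc: "XX \<subseteq> carrier G" unfolding XX_def using c0c tc by auto
    have sub1: "XX \<subseteq> YY"
    proof
      fix w assume "w \<in> XX"
      then obtain i j :: nat where w: "w = c0 [^] i \<otimes> t [^] j" unfolding XX_def by blast
      have h1: "g \<otimes> t [^] i \<otimes> inv g = c0 [^] i \<otimes> t [^] i"
        using conj_pow[OF gc tc, of i] pow_mult_distrib[OF c0t c0c tc, of i] g1ct unfolding g1_def by simp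
      have "g \<otimes> t [^] i \<otimes> inv g \<in> g <# T #> inv g" unfolding conj_mem using tpowT by blast
      moreover have "c0 [^] i \<otimes> t [^] i \<in> N"
        using sub_pow_closed[OF Nsub c0N] sub_pow_closed[OF Nsub tN] Nsub by (simp add: subgroup.m_closed)
      ultimately have "c0 [^] i \<otimes> t [^] i \<in> (g <# T #> inv g) \<inter> N" using h1 by simp
      moreover have "t [^] ((p - 1) * i + j) \<in> T" by (rule tpowT)
      moreover have "w = (c0 [^] i \<otimes> t [^] i) \<otimes> t [^] ((p - 1) * i + j)"
      proof -
        have p1: "p \<ge> 1" using prime_gt_1_nat[OF p] by simp
        have ar: "i + ((p - 1) * i + j) = p * i + j" using p1 by (cases p) auto
        have "t [^] i \<otimes> t [^] ((p - 1) * i + j) = t [^] (i + ((p - 1) * i + j))"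
          using tc by (simp only: nat_pow_mult)
        also have "\<dots> = t [^] (p * i) \<otimes> t [^] j" unfolding ar using tc by (simp only: nat_pow_mult)
        finally have "t [^] i \<otimes> t [^] ((p - 1) * i + j) = t [^] (p * i) \<otimes> t [^] j" .
        also have "\<dots> = t [^] j" using tc tp by (simp add: nat_pow_pow[symmetric])
        finally show ?thesis using w c0c tc by (simp add: m_assoc)
      qed
      ultimately show "w \<in> YY" unfolding YY_def set_mult_mem by blast
    qed
    have sub2: "XX \<subseteq> core G N YY"
    proof
      fix w assume wX: "w \<in> XX"
      then obtain i j :: nat where w: "w = c0 [^] i \<otimes> t [^] j" unfolding XX_def by blast
      show "w \<in> core G N YY" unfolding core_mem
      proof
        fix h assume hN: "h \<in> N"
        have hc: "h \<in> carrier G" using subgroup.mem_carrier[OF Nsub hN] .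
        have ihN: "inv h \<in> N" using subgroup.m_inv_closed[OF Nsub hN] .
        have "inv h <# T #> inv (inv h) = T" using ihN normalizer_mem[OF Tc] unfolding N_def by blast
        moreover have "inv h \<otimes> t \<otimes> inv (inv h) \<in> inv h <# T #> inv (inv h)"
          unfolding conj_mem using tT by blast
        ultimately have "inv h \<otimes> t \<otimes> inv (inv h) \<in> T" by simp
        then have "inv h \<otimes> t \<otimes> h \<in> T" using hc by (simp only: inv_inv)
        then obtain l :: nat where l: "inv h \<otimes> t \<otimes> h = t [^] l" using Tel by blast
        obtain r where r: "acts (inv h) r" using power_map[of "inv h"] hc by auto
        have r': "inv h \<otimes> c0 \<otimes> h = c0 [^] r" using r c0C hc unfolding acts_def by simp
        define y where "y = inv h \<otimes> w \<otimes> h"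
        have "y = (inv h \<otimes> c0 [^] i \<otimes> h) \<otimes> (inv h \<otimes> t [^] j \<otimes> h)"
          unfolding y_def w using hc c0c tc by (simp add: m_assoc)
        also have "\<dots> = (inv h \<otimes> c0 \<otimes> h) [^] i \<otimes> (inv h \<otimes> t \<otimes> h) [^] j"
          using conj_pow[of "inv h" c0 i] conj_pow[of "inv h" t j] hc c0c tc by simp
        also have "\<dots> = c0 [^] (r * i) \<otimes> t [^] (l * j)" unfolding r' l using c0c tc by (simp add: nat_pow_pow)
        finally have "y \<in> XX" unfolding XX_def by blast
        then have "y \<in> YY" using sub1 by blast
        moreover have "w = h \<otimes> y \<otimes> inv h"
        proof -
          have wc: "w \<in> carrier G" using XXc wX by blast
          show ?thesis unfolding y_def using hc wc by (simp add: m_assoc)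
        qed
        ultimately show "w \<in> h <# YY #> inv h" unfolding conj_mem by blast
      qed
    qed
    have TX: "T \<subseteq> XX"
    proof
      fix w assume "w \<in> T"
      then obtain j :: nat where "w = t [^] j" using Tel by blast
      then have "w = c0 [^] (0::nat) \<otimes> t [^] j" using tc by simp
      then show "w \<in> XX" unfolding XX_def by blast
    qed
    have c0X: "c0 \<in> XX"
    proof -
      have "c0 = c0 [^] (1::nat) \<otimes> t [^] (0::nat)" using c0c by simp
      then show ?thesis unfolding XX_def by blast
    qed
    have c0T: "c0 \<notin> T" using TC c0C c01 by blast
    show "T \<subset> core G (normalizer G T) (((g <# T #> inv g) \<inter> normalizer G T) <#> T)"
      using TX sub2 c0X c0T unfolding N_def[symmetric] YY_def[symmetric] by blast
  qed
  moreover have "T \<noteq> {\<one>}" using tT t1 by blast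
  ultimately show ?thesis using core1 by blast
qed

end


context group begin

lemma comm_pows:
  assumes "x \<in> carrier G" "y \<in> carrier G" "x \<otimes> y = y \<otimes> x"
  shows "x [^] (i::nat) \<otimes> y [^] (j::nat) = y [^] j \<otimes> x [^] i"
proof -
  have h: "x [^] i \<otimes> y = y \<otimes> x [^] i" using group_commutes_pow[OF assms(3,1,2)] by blast
  have "y [^] j \<otimes> x [^] i = x [^] i \<otimes> y [^] j"
    using group_commutes_pow[OF h[symmetric] assms(2) nat_pow_closed[OF assms(1)]] by blast
  then show ?thesis by simp
qed

lemma pow_pow_one:
  assumes "x \<in> carrier G" "x [^] (p::nat) = \<one>"
  shows "(x [^] (i::nat)) [^] p = \<one>" "x [^] (p * i) = \<one>"
proof -
  have "(x [^] i) [^] p = (x [^] p) [^] i" using assms(1) by (simp add: nat_pow_pow mult.commute)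
  then show "(x [^] i) [^] p = \<one>" using assms by simp
  have "x [^] (p * i) = (x [^] p) [^] i" using assms(1) by (simp add: nat_pow_pow)
  then show "x [^] (p * i) = \<one>" using assms by simp
qed

lemma pow_mod_one:
  assumes "x \<in> carrier G" "x [^] (p::nat) = \<one>"
  shows "x [^] (k::nat) = x [^] (k mod p)"
proof -
  have h: "x [^] (p * (k div p)) = \<one>" using assms by (simp add: nat_pow_pow[symmetric])
  have "x [^] (p * (k div p)) \<otimes> x [^] (k mod p) = x [^] (p * (k div p) + k mod p)"
    using assms(1) by (rule nat_pow_mult)
  then show ?thesis using h assms(1) by simp
qed

end

context cyc begin

lemma dvd_pow_eq:
  assumes "c \<in> C" "int n dvd int r' - int r"
  shows "c [^] (r::nat) = c [^] r'"
proof -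
  have "[int r' = int r] (mod int n)" using assms(2) by (simp add: cong_iff_dvd_diff)
  then have "[int r = int r'] (mod int n)" by (rule cong_sym)
  then have "[r = r'] (mod n)" by (simp add: cong_int_iff)
  then show ?thesis using pow_C_cong[OF assms(1)] by blast
qed

theorem part1:
  assumes roq: "roquette G" and p: "Factorial_Ring.prime p" and p2n: "p^2 dvd n"
    and m2: "multiplicity (2::nat) n \<noteq> 2"
    and img: "in_image_pi G C (alpha_aut G C p)"
  shows False
proof -
  define e where "e = alpha_exp n p"
  obtain g where gc: "g \<in> carrier G" and gact: "\<forall>c\<in>C. g \<otimes> c \<otimes> inv g = alpha_aut G C p c"
    using img unfolding in_image_pi_def by blast
  have ge: "acts g e" unfolding acts_def e_def using gact unfolding alpha_aut_def cC by simp
  have ec: "[e = 1 + p ^ (multiplicity p n - 1)] (mod p ^ multiplicity p n)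
              \<and> [e = 1] (mod (n div p ^ multiplicity p n))"
    unfolding e_def alpha_exp_def by (rule someI_ex[OF alpha_exp_exists[OF p n0]])
  have m2': "p = 2 \<Longrightarrow> multiplicity p n \<noteq> 2" using m2 by simp
  note NT = nt_part1[OF p n0 p2n m2' conjunct1[OF ec] conjunct2[OF ec]]
  have p1: "p > 1" using prime_gt_1_nat[OF p] .
  have pn: "p dvd n" using p2n by (simp add: power2_eq_square dvd_mult_left)
  have gpe: "acts (g [^] p) (e ^ p)" using acts_pow[OF ge gc] .
  have gpC: "g [^] p \<in> C"
  proof (rule cent_in)
    show "g [^] p \<in> carrier G" using gc by simp
    fix c assume cC': "c \<in> C"
    have cc: "c \<in> carrier G" using C_mem cC' .
    have "g [^] p \<otimes> c \<otimes> inv (g [^] p) = c [^] (e ^ p)" using gpe cC' unfolding acts_def by simp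
    also have "\<dots> = c [^] (1::nat)"
      by (rule dvd_pow_eq[OF cC']) (use NT(1) in \<open>simp add: dvd_diff_commute\<close>)
    finally have "g [^] p \<otimes> c \<otimes> inv (g [^] p) = c" using cc by simp
    then have "g [^] p \<otimes> c \<otimes> inv (g [^] p) \<otimes> g [^] p = c \<otimes> g [^] p" by simp
    then show "g [^] p \<otimes> c = c \<otimes> g [^] p" using cc gc by (simp add: m_assoc)
  qed
  obtain \<tau> :: nat where tau: "g [^] p = a [^] \<tau>" using C_pow[OF gpC] by blast
  have "g \<otimes> g [^] p \<otimes> inv g = (g [^] p) [^] e" using ge gpC unfolding acts_def by simp
  moreover have "g \<otimes> g [^] p \<otimes> inv g = g [^] p"
  proof -
    have "g \<otimes> g [^] p = g [^] p \<otimes> g" using nat_pow_Suc2[OF gc, of p] by simp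
    then have "g \<otimes> g [^] p \<otimes> inv g = g [^] p \<otimes> g \<otimes> inv g" by simp
    also have "\<dots> = g [^] p" using gc by (simp add: m_assoc)
    finally show ?thesis .
  qed
  ultimately have "a [^] (\<tau> * e) = a [^] \<tau>" using tau aG by (simp add: nat_pow_pow)
  then have "a [^] int (\<tau> * e) = a [^] int \<tau>" by (simp only: int_pow_int)
  then have "int n dvd int \<tau> - int (\<tau> * e)" using a_int_pow_eq by blast
  then have "int n dvd int \<tau> * (int e - 1)"
    by (metis dvd_minus_iff minus_diff_eq of_nat_mult right_diff_distrib mult.right_neutral)
  then have "int p dvd int \<tau>" using NT(3) by blast
  then obtain \<tau>' where tau': "\<tau> = p * \<tau>'" by (auto elim: dvdE simp: int_dvd_int_iff)
  obtain s' where s': "(\<Sum>j<p. int e^j) = int p * s'" and cs': "coprime s' (int n)" using NT(4) by blast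
  define S where "S = (\<Sum>j<p. e^j)"
  have Ss: "int S = int p * s'" unfolding S_def using s' by simp
  obtain x where x: "[s' * x = 1] (mod int n)" using cong_solve_coprime_int[OF cs'] by blast
  define i where "i = nat ((x * (- int \<tau>')) mod int n)"
  have ii: "int i = (x * (- int \<tau>')) mod int n" unfolding i_def using n0 by simp
  have idvd: "int n dvd s' * int i + int \<tau>'"
  proof -
    have "[int i = x * (- int \<tau>')] (mod int n)" unfolding ii cong_def by simp
    then have "[s' * int i = s' * x * (- int \<tau>')] (mod int n)"
      by (metis cong_scalar_left mult.assoc)
    moreover have "[s' * x * (- int \<tau>') = 1 * (- int \<tau>')] (mod int n)"
      using cong_scalar_right[OF x] by blast
    ultimately have "[s' * int i = - int \<tau>'] (mod int n)" using cong_trans by fastforce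
    then show ?thesis by (simp add: cong_iff_dvd_diff)
  qed
  define y where "y = a [^] i \<otimes> g"
  have yc: "y \<in> carrier G" unfolding y_def using aG gc by simp
  have ye: "acts y e" unfolding y_def using acts_mult_C[OF ge gc pow_C] .
  have yp: "y [^] p = \<one>"
  proof -
    have "y [^] p = (a [^] i) [^] S \<otimes> g [^] p" unfolding y_def S_def using pow_formula[OF ge gc pow_C] .
    also have "\<dots> = a [^] (i * S + \<tau>)" using aG tau by (simp add: nat_pow_pow nat_pow_mult)
    also have "\<dots> = \<one>"
    proof -
      have "int (i * S + \<tau>) = int p * (s' * int i + int \<tau>')" using Ss tau' by (simp add: algebra_simps)
      then have "int n dvd int (i * S + \<tau>)" using idvd by simp
      then have "n dvd i * S + \<tau>" by (simp only: int_dvd_int_iff)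
      then show ?thesis using a_pow_one by simp
    qed
    finally show ?thesis .
  qed
  have ynC: "y \<notin> C"
  proof
    assume yC: "y \<in> C"
    have "y \<otimes> a \<otimes> inv y = a" using C_comm[OF yC aC] yc aG by (simp add: m_assoc)
    moreover have "y \<otimes> a \<otimes> inv y = a [^] e" using ye aC unfolding acts_def by simp
    ultimately have "a [^] int e = a [^] (int 1)" using aG by (simp add: int_pow_int)
    then have "int n dvd int 1 - int e" using a_int_pow_eq by blast
    then have "int n dvd int e - 1" by (simp add: dvd_diff_commute)
    with NT(2) show False by simp
  qed
  define z where "z = a [^] (n div p)"
  have zC: "z \<in> C" unfolding z_def using pow_C .
  have zc: "z \<in> carrier G" using C_mem zC .
  have ndp: "n = p * (n div p)" using pn by simp
  have ordz: "ord z = p"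
  proof -
    have "ord z = n div (n div p)" unfolding z_def ord_a[symmetric]
      by (rule ord_pow[OF aG]) (use ord_a pn n0 p1 in \<open>auto intro: dvd_div_mult_self\<close>)
    also have "\<dots> = p" using ndp n0 p1 by (metis div_mult_self1_is_m nat_0_less_mult_iff mult.commute)
    finally show ?thesis .
  qed
  have zp: "z [^] p = \<one>" using pow_ord_eq_1[OF zc] ordz by simp
  have yz: "y \<otimes> z = z \<otimes> y"
  proof -
    have "y \<otimes> z \<otimes> inv y = z [^] e" using ye zC unfolding acts_def by simp
    also have "\<dots> = a [^] ((n div p) * e)" unfolding z_def using aG by (simp add: nat_pow_pow)
    also have "\<dots> = a [^] ((n div p) * 1)"
      by (rule dvd_pow_eq[OF aC]) (use NT(5) in \<open>simp add: algebra_simps dvd_diff_commute\<close>)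
    finally have "y \<otimes> z \<otimes> inv y = z" unfolding z_def by simp
    then have "y \<otimes> z \<otimes> inv y \<otimes> y = z \<otimes> y" by simp
    then show ?thesis using yc zc by (simp add: m_assoc)
  qed
  have hconj: "\<exists>(l::nat) (r::nat). h \<otimes> y \<otimes> inv h = z [^] l \<otimes> y \<and> h \<otimes> z \<otimes> inv h = z [^] r"
    if hc: "h \<in> carrier G" for h
  proof -
    define hy where "hy = h \<otimes> y \<otimes> inv h"
    have hyc: "hy \<in> carrier G" unfolding hy_def using hc yc by simp
    have hye: "acts hy e" unfolding hy_def using acts_conj[OF ye yc hc] .
    define u where "u = hy \<otimes> inv y"
    have uC: "u \<in> C" unfolding u_def using acts_same[OF hye ye hyc yc] .
    obtain j :: nat where j: "u = a [^] j" using C_pow[OF uC] by blast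
    have hyu: "hy = u \<otimes> y" unfolding u_def using hyc yc by (simp add: m_assoc)
    have "hy [^] p = \<one>" unfolding hy_def using conj_pow[OF hc yc, of p] yp hc by simp
    moreover have "hy [^] p = u [^] S \<otimes> y [^] p" unfolding hyu S_def using pow_formula[OF ye yc uC] .
    ultimately have "u [^] S = \<one>" using yp C_mem[OF uC] by simp
    then have "a [^] (j * S) = \<one>" using j aG by (simp add: nat_pow_pow)
    then have "n dvd j * S" using a_pow_one by simp
    then have "int n dvd int j * int S" by (metis int_dvd_int_iff of_nat_mult)
    then have "int n dvd s' * (int j * int p)" using Ss by (simp add: algebra_simps)
    then have "int n dvd int j * int p" using cs' by (simp add: coprime_dvd_mult_right_iff coprime_commute)
    then have "n dvd j * p" by (metis int_dvd_int_iff of_nat_mult)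
    then have "p * (n div p) dvd p * j" using ndp by (simp add: mult.commute)
    then have "(n div p) dvd j" using p1 by simp
    then obtain l where l: "j = (n div p) * l" by (auto elim: dvdE)
    have "u = z [^] l" unfolding j l z_def using aG by (simp add: nat_pow_pow)
    then have 1: "h \<otimes> y \<otimes> inv h = z [^] l \<otimes> y" using hyu hy_def by simp
    obtain r where r: "acts h r" using power_map[OF hc] by blast
    have 2: "h \<otimes> z \<otimes> inv h = z [^] r" using r zC unfolding acts_def by simp
    show ?thesis using 1 2 by blast
  qed
  define B where "B = {w. \<exists>(i::nat) (j::nat). w = z [^] i \<otimes> y [^] j}"
  have Bc: "B \<subseteq> carrier G" unfolding B_def using zc yc by auto
  have Bmult: "(z [^] i \<otimes> y [^] j) \<otimes> (z [^] i' \<otimes> y [^] j') = z [^] (i + i') \<otimes> y [^] (j + j')"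
    for i j i' j' :: nat
  proof -
    have cm: "y [^] j \<otimes> z [^] i' = z [^] i' \<otimes> y [^] j" using comm_pows[OF yc zc yz] by simp
    have "(z [^] i \<otimes> y [^] j) \<otimes> (z [^] i' \<otimes> y [^] j') = z [^] i \<otimes> (y [^] j \<otimes> z [^] i') \<otimes> y [^] j'"
      using zc yc by (simp add: m_assoc)
    also have "\<dots> = z [^] i \<otimes> (z [^] i' \<otimes> y [^] j) \<otimes> y [^] j'" by (simp only: cm)
    also have "\<dots> = z [^] (i + i') \<otimes> y [^] (j + j')"
      using zc yc by (simp add: m_assoc nat_pow_mult[symmetric])
    finally show ?thesis .
  qed
  have pp: "(p - 1) * k + k = p * k" for k :: nat using p1 by (cases p) auto
  have Bsub: "subgroup B G"
  proof (rule subgroupI[OF Bc])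
    have "\<one> = z [^] (0::nat) \<otimes> y [^] (0::nat)" by simp
    then show "B \<noteq> {}" unfolding B_def by blast
  next
    fix w assume "w \<in> B"
    then obtain i j :: nat where w: "w = z [^] i \<otimes> y [^] j" unfolding B_def by blast
    have "(z [^] ((p-1)*i) \<otimes> y [^] ((p-1)*j)) \<otimes> w = \<one>"
      unfolding w Bmult pp using pow_pow_one(2)[OF zc zp] pow_pow_one(2)[OF yc yp] by simp
    then have "inv w = z [^] ((p-1)*i) \<otimes> y [^] ((p-1)*j)" using w zc yc by (intro inv_equality) auto
    then show "inv w \<in> B" unfolding B_def by blast
  next
    fix w1 w2 assume "w1 \<in> B" "w2 \<in> B"
    then obtain i j i' j' :: nat where "w1 = z [^] i \<otimes> y [^] j" "w2 = z [^] i' \<otimes> y [^] j'"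
      unfolding B_def by blast
    then show "w1 \<otimes> w2 \<in> B" unfolding B_def using Bmult by blast
  qed
  have Bnorm: "B \<lhd> G"
  proof (rule normal_invI[OF Bsub])
    fix h w assume hc: "h \<in> carrier G" and "w \<in> B"
    then obtain i j :: nat where w: "w = z [^] i \<otimes> y [^] j" unfolding B_def by blast
    obtain l r :: nat where l: "h \<otimes> y \<otimes> inv h = z [^] l \<otimes> y" and r: "h \<otimes> z \<otimes> inv h = z [^] r"
      using hconj[OF hc] by blast
    have zly: "z [^] l \<otimes> y = y \<otimes> z [^] l" using comm_pows[OF zc yc yz[symmetric], of l 1] yc by simp
    have "h \<otimes> w \<otimes> inv h = (h \<otimes> z [^] i \<otimes> inv h) \<otimes> (h \<otimes> y [^] j \<otimes> inv h)"
      unfolding w using hc zc yc by (simp add: m_assoc)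
    also have "\<dots> = (z [^] r) [^] i \<otimes> (z [^] l \<otimes> y) [^] j"
      using conj_pow[OF hc zc, of i] conj_pow[OF hc yc, of j] l r by simp
    also have "(z [^] l \<otimes> y) [^] j = (z [^] l) [^] j \<otimes> y [^] j"
      using pow_mult_distrib[OF zly] zc yc by simp
    also have "(z [^] r) [^] i \<otimes> ((z [^] l) [^] j \<otimes> y [^] j) = z [^] (r * i + l * j) \<otimes> y [^] j"
      using zc yc by (simp add: m_assoc nat_pow_pow nat_pow_mult[symmetric])
    finally show "h \<otimes> w \<otimes> inv h \<in> B" unfolding B_def by blast
  qed
  have Bab: "\<forall>u\<in>B. \<forall>v\<in>B. u \<otimes> v = v \<otimes> u"
  proof (intro ballI)
    fix u v assume "u \<in> B" "v \<in> B"
    then obtain i j i' j' :: nat where "u = z [^] i \<otimes> y [^] j" "v = z [^] i' \<otimes> y [^] j'"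
      unfolding B_def by blast
    then show "u \<otimes> v = v \<otimes> u" using Bmult by (simp add: add.commute)
  qed
  have "cyclic_group (subgroup_generated G B)" using roq Bnorm Bab unfolding roquette_def by blast
  then obtain w0 where w0B: "w0 \<in> B" and Bw0: "B = generate G {w0}" using gen_of_cyclic[OF Bsub] by blast
  obtain i0 j0 :: nat where w0: "w0 = z [^] i0 \<otimes> y [^] j0" using w0B unfolding B_def by blast
  have w0c: "w0 \<in> carrier G" using Bc w0B by blast
  have w0p: "w0 [^] p = \<one>"
  proof -
    have "z [^] i0 \<otimes> y [^] j0 = y [^] j0 \<otimes> z [^] i0" using comm_pows[OF zc yc yz[symmetric]] by simp
    then have "w0 [^] p = (z [^] i0) [^] p \<otimes> (y [^] j0) [^] p" unfolding w0
      using pow_mult_distrib zc yc by simp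
    also have "\<dots> = \<one>" using pow_pow_one(1)[OF zc zp] pow_pow_one(1)[OF yc yp] by simp
    finally show ?thesis .
  qed
  have "B \<subseteq> (\<lambda>k. w0 [^] k) ` {..<p}"
  proof
    fix w assume "w \<in> B"
    then obtain k :: nat where "w = w0 [^] k" using gen_nat[OF fin w0c] Bw0 by blast
    then have "w = w0 [^] (k mod p)" using pow_mod_one[OF w0c w0p] by simp
    moreover have "k mod p < p" using p1 by simp
    ultimately show "w \<in> (\<lambda>k. w0 [^] k) ` {..<p}" by blast
  qed
  then have cB: "card B \<le> p" by (metis card_image_le card_lessThan finite_lessThan card_mono finite_imageI le_trans)
  have finB: "finite B" using fin Bc finite_subset by blast
  have inj: "inj_on (\<lambda>i. z [^] i) {..<p}"
  proof -
    have "{..<p} = {0 .. ord z - 1}" using ordz p1 by auto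
    then show ?thesis using ord_inj[OF zc] by simp
  qed
  have imB: "(\<lambda>i. z [^] i) ` {..<p} \<subseteq> B"
  proof
    fix w assume "w \<in> (\<lambda>i. z [^] i) ` {..<p}"
    then obtain i :: nat where "w = z [^] i" by blast
    then have "w = z [^] i \<otimes> y [^] (0::nat)" using zc by simp
    then show "w \<in> B" unfolding B_def by blast
  qed
  have yB: "y \<in> B"
  proof -
    have "y = z [^] (0::nat) \<otimes> y [^] (1::nat)" using yc by simp
    then show ?thesis unfolding B_def by blast
  qed
  have yim: "y \<notin> (\<lambda>i. z [^] i) ` {..<p}" using ynC Cpow_closed[OF zC] by blast
  have "card (insert y ((\<lambda>i. z [^] i) ` {..<p})) = Suc p"
    using yim inj by (simp add: card_image)
  moreover have "insert y ((\<lambda>i. z [^] i) ` {..<p}) \<subseteq> B" using imB yB by blast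
  ultimately have "Suc p \<le> card B" using finB by (metis card_mono)
  with cB show False by simp
qed

end


theorem mainTheorem8:
  fixes G (structure) and C :: "'a set" and n :: nat
  assumes "group G" and "finite (carrier G)"
    and "C \<lhd> G" and "cyclic_group (subgroup_generated G C)" and "card C = n"
    and "centralizer G C = C"
    and "multiplicity (2::nat) n \<noteq> 2"
  shows
    "(roquette G \<longrightarrow>
        (\<forall>p::nat. Factorial_Ring.prime p \<and> p\<^sup>2 dvd n \<longrightarrow> \<not> in_image_pi G C (alpha_aut G C p)))
   \<and> ((\<forall>p::nat. Factorial_Ring.prime p \<and> p\<^sup>2 dvd n \<longrightarrow>
         \<not> (\<exists>g\<in>carrier G. \<forall>x\<in>sylow_part G C p.
               g \<otimes> x \<otimes> inv g = x [^] (1 + p ^ (multiplicity p n - 1))))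
       \<longrightarrow> \<not> (\<exists>T. expansive G T \<and> T \<noteq> {\<one>} \<and> core G (carrier G) T = {\<one>}))
   \<and> (\<not> (\<exists>T. expansive G T \<and> T \<noteq> {\<one>} \<and> core G (carrier G) T = {\<one>})
       \<longrightarrow> roquette G)"
proof -
  interpret group G by (rule assms(1))
  have Csub: "subgroup C G" using assms(3) normal_imp_subgroup by blast
  obtain a where aC: "a \<in> C" and Cg: "C = generate G {a}" using gen_of_cyclic[OF Csub assms(4)] by blast
  have aG: "a \<in> carrier G" using subgroup.mem_carrier[OF Csub aC] .
  have cycI: "cyc G C a n"
    using assms(1,2,3,5,6) aG Cg unfolding cyc_def cyc_axioms_def by blast
  interpret cyc G C a n by (rule cycI)
  show ?thesis
  proof (intro conjI impI allI)
    fix p :: nat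
    assume roq: "roquette G" and pp: "Factorial_Ring.prime p \<and> p\<^sup>2 dvd n"
    show "\<not> in_image_pi G C (alpha_aut G C p)"
    proof
      assume "in_image_pi G C (alpha_aut G C p)"
      then show False using part1[OF roq conjunct1[OF pp] conjunct2[OF pp] assms(7)] by simp
    qed
  next
    assume hyp: "\<forall>p::nat. Factorial_Ring.prime p \<and> p\<^sup>2 dvd n \<longrightarrow>
         \<not> (\<exists>g\<in>carrier G. \<forall>x\<in>sylow_part G C p.
               g \<otimes> x \<otimes> inv g = x [^] (1 + p ^ (multiplicity p n - 1)))"
    show "\<not> (\<exists>T. expansive G T \<and> T \<noteq> {\<one>} \<and> core G (carrier G) T = {\<one>})"
    proof
      assume "\<exists>T. expansive G T \<and> T \<noteq> {\<one>} \<and> core G (carrier G) T = {\<one>}"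
      then obtain T where T: "expansive G T" "T \<noteq> {\<one>}" "core G (carrier G) T = {\<one>}" by blast
      have hyp': "\<And>p. Factorial_Ring.prime p \<Longrightarrow> p^2 dvd n \<Longrightarrow>
         \<not> (\<exists>g\<in>carrier G. \<forall>x\<in>sylow_part G C p. g \<otimes> x \<otimes> inv g = x [^] (1 + p ^ (multiplicity p n - 1)))"
        using hyp by simp
      show False by (rule part2[OF hyp' assms(7) T])
    qed
  next
    assume nT: "\<not> (\<exists>T. expansive G T \<and> T \<noteq> {\<one>} \<and> core G (carrier G) T = {\<one>})"
    show "roquette G"
    proof (rule ccontr)
      assume "\<not> roquette G"
      then have "\<exists>T. expansive G T \<and> T \<noteq> {\<one>} \<and> core G (carrier G) T = {\<one>}" by (rule part3)
      with nT show False by simp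
    qed
  qed
qed

end
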